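(* Fix $p\in(0,1]$ and $t\in(0,1)$. Let $G_n\sim\mathcal G(n,p)$ and, given $G_n$, let $\mathbf X$ be drawn from the Ising model with coupling matrix $A_n(i,j)=\frac{1}{(n-1)p}G_n(i,j)$ and parameters $(\beta,B)$; denote by $\mathbb P^{\mathrm{er}}_{n,\beta,B}$ the joint law of $(\mathbf X,G_n)$ on $\{-1,1\}^n\times\{0,1\}^{\binom n2}$. Let $\Theta_t=\{(\beta,B)\in(0,\infty)^2: t=\tanh(\beta t+B)\}$ and let $\mathbb Q_n$ be the product measure on $\{-1,1\}^n$ with $\mathbb Q_n(X_i=1)=\frac{1+t}{2}=1-\mathbb Q_n(X_i=-1)$. Then for every $(\beta,B)\in\Theta_t$, the sequence $\mathbb Q_n\times\mathcal G(n,p)$ is contiguous with respect to $\mathbb P^{\mathrm{er}}_{n,\beta,B}$: for any events $E_n$, $\mathbb P^{\mathrm{er}}_{n,\beta,B}(E_n)\to0$ implies $(\mathbb Q_n\times\mathcal G(n,p))(E_n)\to0$. Consequently there is no sequence of estimators $(\tilde\beta_n,\tilde B_n)$ (measurable functions of $(\mathbf X,G_n)$) that is consistent for $(\beta,B)$ under $\mathbb P^{\mathrm{er}}_{n,\beta,B}$ for all $(\beta,B)\in\Theta_t$ (and hence none consistent on all of $\Theta=\{\beta>0,B\ne0\}$).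
   Context: $\mathcal G(n,p)$ is the Erdős–Rényi random graph on vertex set $[n]$, each edge present independently with probability $p$; $G_n(i,j)\in\{0,1\}$ is its adjacency indicator ($G_n(i,i)=0$). The Ising model with coupling matrix $A_n$ is $\mathbb P(\mathbf X=\mathbf x)=Z_n^{-1}\exp(\frac{\beta}{2}\mathbf x^\top A_n\mathbf x+B\sum_i x_i)$ on $\{-1,1\}^n$. Note that for $(\beta,B)\in\Theta_t$, $\frac{1+t}{2}=\frac{1}{1+e^{-2(\beta t+B)}}$. An estimator sequence is consistent at $(\beta,B)$ if it converges in $\mathbb P^{\mathrm{er}}_{n,\beta,B}$-probability to $(\beta,B)$. *)

theory Defs
  imports "HOL-Analysis.Analysis"
begin

definition spins :: "nat \<Rightarrow> (nat \<Rightarrow> real) set" where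
  "spins n = ({0..<n} \<rightarrow>\<^sub>E {-1, 1})"

definition edge_slots :: "nat \<Rightarrow> (nat \<times> nat) set" where
  "edge_slots n = {(i, j). i < j \<and> j < n}"

definition adj :: "(nat \<times> nat) set \<Rightarrow> nat \<Rightarrow> nat \<Rightarrow> real" where
  "adj G i j = (if (i, j) \<in> G \<or> (j, i) \<in> G then 1 else 0)"

text \<open>Sample space {-1,1}^n \<times> {0,1}^(n choose 2).\<close>
definition sample_space :: "nat \<Rightarrow> ((nat \<Rightarrow> real) \<times> (nat \<times> nat) set) set" where
  "sample_space n = spins n \<times> Pow (edge_slots n)"

definition er_pmf :: "nat \<Rightarrow> real \<Rightarrow> (nat \<times> nat) set \<Rightarrow> real" where
  "er_pmf n p G = p ^ card G * (1 - p) ^ (card (edge_slots n) - card G)"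

definition coupling :: "nat \<Rightarrow> real \<Rightarrow> (nat \<times> nat) set \<Rightarrow> nat \<Rightarrow> nat \<Rightarrow> real" where
  "coupling n p G i j = adj G i j / ((real n - 1) * p)"

definition ising_energy :: "nat \<Rightarrow> (nat \<Rightarrow> nat \<Rightarrow> real) \<Rightarrow> real \<Rightarrow> real \<Rightarrow> (nat \<Rightarrow> real) \<Rightarrow> real" where
  "ising_energy n A \<beta> B x =
     \<beta> / 2 * (\<Sum>i<n. \<Sum>j<n. x i * A i j * x j) + B * (\<Sum>i<n. x i)"

definition ising_Z :: "nat \<Rightarrow> (nat \<Rightarrow> nat \<Rightarrow> real) \<Rightarrow> real \<Rightarrow> real \<Rightarrow> real" where
  "ising_Z n A \<beta> B = (\<Sum>y\<in>spins n. exp (ising_energy n A \<beta> B y))"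

definition ising_pmf :: "nat \<Rightarrow> (nat \<Rightarrow> nat \<Rightarrow> real) \<Rightarrow> real \<Rightarrow> real \<Rightarrow> (nat \<Rightarrow> real) \<Rightarrow> real" where
  "ising_pmf n A \<beta> B x = exp (ising_energy n A \<beta> B x) / ising_Z n A \<beta> B"

definition P_er_pmf :: "nat \<Rightarrow> real \<Rightarrow> real \<Rightarrow> real \<Rightarrow> (nat \<Rightarrow> real) \<times> (nat \<times> nat) set \<Rightarrow> real" where
  "P_er_pmf n p \<beta> B \<omega> = er_pmf n p (snd \<omega>) * ising_pmf n (coupling n p (snd \<omega>)) \<beta> B (fst \<omega>)"

definition Q_pmf :: "nat \<Rightarrow> real \<Rightarrow> (nat \<Rightarrow> real) \<Rightarrow> real" where
  "Q_pmf n t x = (\<Prod>i<n. if x i = 1 then (1 + t) / 2 else (1 - t) / 2)"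

definition QG_pmf :: "nat \<Rightarrow> real \<Rightarrow> real \<Rightarrow> (nat \<Rightarrow> real) \<times> (nat \<times> nat) set \<Rightarrow> real" where
  "QG_pmf n p t \<omega> = Q_pmf n t (fst \<omega>) * er_pmf n p (snd \<omega>)"

definition prob_of :: "nat \<Rightarrow> ((nat \<Rightarrow> real) \<times> (nat \<times> nat) set \<Rightarrow> real)
    \<Rightarrow> ((nat \<Rightarrow> real) \<times> (nat \<times> nat) set) set \<Rightarrow> real" where
  "prob_of n f E = (\<Sum>\<omega>\<in>E \<inter> sample_space n. f \<omega>)"

definition P_er :: "nat \<Rightarrow> real \<Rightarrow> real \<Rightarrow> real \<Rightarrow> ((nat \<Rightarrow> real) \<times> (nat \<times> nat) set) set \<Rightarrow> real" where
  "P_er n p \<beta> B E = prob_of n (P_er_pmf n p \<beta> B) E"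

definition QG :: "nat \<Rightarrow> real \<Rightarrow> real \<Rightarrow> ((nat \<Rightarrow> real) \<times> (nat \<times> nat) set) set \<Rightarrow> real" where
  "QG n p t E = prob_of n (QG_pmf n p t) E"

definition Theta_t :: "real \<Rightarrow> (real \<times> real) set" where
  "Theta_t t = {(\<beta>, B). \<beta> > 0 \<and> B > 0 \<and> t = tanh (\<beta> * t + B)}"

text \<open>Consistency of an estimator sequence at (beta,B) under P^er: convergence in probability.
  (All functions on the finite discrete sample space are measurable.)\<close>
definition consistent_at ::
  "real \<Rightarrow> (nat \<Rightarrow> (nat \<Rightarrow> real) \<times> (nat \<times> nat) set \<Rightarrow> real \<times> real) \<Rightarrow> real \<Rightarrow> real \<Rightarrow> bool" where
  "consistent_at p est \<beta> B \<longleftrightarrow>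
     (\<forall>\<epsilon>>0. (\<lambda>n. P_er n p \<beta> B {\<omega>. dist (est n \<omega>) (\<beta>, B) > \<epsilon>}) \<longlonglongrightarrow> 0)"

end

theory Submission
  imports Defs
begin


lemma sinh_ge_self: fixes x :: real assumes "0 \<le> x" shows "x \<le> sinh x"
proof -
  have "(\<lambda>y. sinh y - y) 0 \<le> (\<lambda>y. sinh y - y) x"
    by (rule DERIV_nonneg_imp_nondecreasing[OF assms])
       (auto intro!: exI derivative_eq_intros simp: cosh_real_ge_1)
  then show ?thesis by simp
qed

lemma tanh_F1: fixes v :: real assumes "0 \<le> v" shows "v * (1 - tanh v ^ 2) \<le> tanh v"
proof -
  have c: "cosh v > 0" by simp
  have "v \<le> sinh v * cosh v"
  proof -
    have "sinh v \<ge> 0" using assms by simp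
    then have "sinh v \<le> sinh v * cosh v" using cosh_real_ge_1[of v]
      by (metis mult_left_mono mult.right_neutral)
    with sinh_ge_self[OF assms] show ?thesis by linarith
  qed
  then have "v / (cosh v)^2 \<le> sinh v * cosh v / (cosh v)^2"
    by (simp add: divide_right_mono)
  also have "\<dots> = tanh v" by (simp add: tanh_def power2_eq_square)
  finally have "v / (cosh v)^2 \<le> tanh v" .
  moreover have "1 - tanh v ^ 2 = 1 / (cosh v)^2"
  proof -
    have e: "(cosh v)^2 - (sinh v)^2 = 1" by (simp add: cosh_square_eq)
    have "1 - tanh v ^ 2 = ((cosh v)^2 - (sinh v)^2) / (cosh v)^2"
      using c by (simp add: tanh_def power_divide diff_divide_distrib)
    then show ?thesis using e by simp
  qed
  ultimately show ?thesis by simp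
qed

lemma tanh_ratio_mono: fixes u \<theta> :: real assumes "0 < u" "u \<le> \<theta>"
  shows "tanh \<theta> / \<theta> \<le> tanh u / u"
proof -
  show ?thesis
  proof (rule DERIV_nonpos_imp_nonincreasing[OF assms(2), where f = "\<lambda>v. tanh v / v"])
    fix x assume x: "u \<le> x" "x \<le> \<theta>"
    then have xp: "x > 0" using assms by simp
    have "DERIV (\<lambda>v. tanh v / v) x :> ((1 - tanh x ^ 2) * x - tanh x * 1) / (x * x)"
      using xp by (auto intro!: derivative_eq_intros)
    moreover have "((1 - tanh x ^ 2) * x - tanh x * 1) / (x * x) \<le> 0"
      using tanh_F1[of x] xp by (intro divide_nonpos_pos) (auto simp: algebra_simps)
    ultimately show "\<exists>y. DERIV (\<lambda>v. tanh v / v) x :> y \<and> y \<le> 0" by blast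
  qed
qed

lemma tanh_chord: fixes u \<theta> :: real assumes "0 \<le> u" "u \<le> \<theta>" "0 < \<theta>"
  shows "u * (tanh \<theta> / \<theta>) \<le> tanh u"
proof (cases "u = 0")
  case True then show ?thesis by simp
next
  case False
  then have "u > 0" using assms by simp
  from tanh_ratio_mono[OF this assms(2)] have "tanh \<theta> / \<theta> \<le> tanh u / u" .
  then have "u * (tanh \<theta> / \<theta>) \<le> u * (tanh u / u)" using \<open>u>0\<close> by (intro mult_left_mono) auto
  also have "\<dots> = tanh u" using \<open>u>0\<close> by simp
  finally show ?thesis .
qed

lemma tanh_tangent: fixes \<theta> y :: real assumes "0 \<le> \<theta>" "0 \<le> y"
  shows "tanh (\<theta> + y) - tanh \<theta> \<le> (1 - tanh \<theta> ^ 2) * y"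
proof -
  have "(\<lambda>y. (1 - tanh \<theta> ^ 2) * y - tanh (\<theta> + y)) 0 \<le> (\<lambda>y. (1 - tanh \<theta> ^ 2) * y - tanh (\<theta> + y)) y"
  proof (rule DERIV_nonneg_imp_nondecreasing[OF assms(2)])
    fix x :: real assume x: "0 \<le> x" "x \<le> y"
    have "DERIV (\<lambda>y. (1 - tanh \<theta> ^ 2) * y - tanh (\<theta> + y)) x :> (1 - tanh \<theta> ^ 2) * 1 - (1 - tanh (\<theta> + x) ^ 2) * (0 + 1)"
      by (auto intro!: derivative_eq_intros)
    moreover have "tanh \<theta> ^ 2 \<le> tanh (\<theta> + x) ^ 2"
    proof -
      have "0 \<le> tanh \<theta>" using assms by simp
      moreover have "tanh \<theta> \<le> tanh (\<theta> + x)" using x by simp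
      ultimately show ?thesis by (simp add: power_mono)
    qed
    ultimately show "\<exists>d. DERIV (\<lambda>y. (1 - tanh \<theta> ^ 2) * y - tanh (\<theta> + y)) x :> d \<and> d \<ge> 0"
      by (intro exI[of _ "(1 - tanh \<theta> ^ 2) * 1 - (1 - tanh (\<theta> + x) ^ 2) * (0 + 1)"]) auto
  qed
  then show ?thesis by simp
qed

definition psi :: "real \<Rightarrow> real \<Rightarrow> real" where
  "psi \<theta> s = ln (cosh (\<theta> + s) / cosh \<theta>) - s * tanh \<theta>"

lemma psi_bound: fixes \<theta> s :: real assumes "0 < \<theta>" "- \<theta> \<le> s"
  shows "psi \<theta> s \<le> (tanh \<theta> / \<theta>) * s^2 / 2"
proof -
  define t where "t = tanh \<theta>"
  define \<kappa> where "\<kappa> = t / \<theta>"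
  have kap: "1 - t^2 \<le> \<kappa>" using tanh_F1[of \<theta>] assms(1) unfolding \<kappa>_def t_def
    by (simp add: field_simps)
  define k where "k = (\<lambda>s. \<kappa> * s^2 / 2 - ln (cosh (\<theta> + s)) + ln (cosh \<theta>) + s * t)"
  have dk: "DERIV k x :> \<kappa> * x - tanh (\<theta> + x) + t" for x
  proof -
    have "DERIV k x :> \<kappa> * (real 2 * x ^ (2 - 1) * 1) / 2 - sinh (\<theta> + x) * (0 + 1) / cosh (\<theta> + x) + 0 + 1 * t"
      unfolding k_def by (auto intro!: derivative_eq_intros)
    then show ?thesis by (simp add: tanh_def)
  qed
  have k0: "k 0 = 0" by (simp add: k_def)
  have "k 0 \<le> k s"
  proof (cases "0 \<le> s")
    case True
    show ?thesis
    proof (rule DERIV_nonneg_imp_nondecreasing[OF True])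
      fix x assume x: "0 \<le> x" "x \<le> s"
      have "tanh (\<theta> + x) - t \<le> (1 - t^2) * x" using tanh_tangent[of \<theta> x] assms x unfolding t_def by simp
      also have "\<dots> \<le> \<kappa> * x" using kap x by (simp add: mult_right_mono)
      finally show "\<exists>y. DERIV k x :> y \<and> y \<ge> 0" using dk by (intro exI[of _ "\<kappa> * x - tanh (\<theta> + x) + t"]) auto
    qed
  next
    case False
    show ?thesis
    proof (rule DERIV_nonpos_imp_nonincreasing[of s 0 k])
      show "s \<le> 0" using False by simp
      fix x assume x: "s \<le> x" "x \<le> 0"
      have "(\<theta> + x) * (t / \<theta>) \<le> tanh (\<theta> + x)" using tanh_chord[of "\<theta>+x" \<theta>] assms x unfolding t_def by simp
      moreover have "(\<theta> + x) * (t / \<theta>) = t + \<kappa> * x" using assms unfolding \<kappa>_def by (simp add: field_simps)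
      ultimately show "\<exists>y. DERIV k x :> y \<and> y \<le> 0" using dk by (intro exI[of _ "\<kappa> * x - tanh (\<theta> + x) + t"]) auto
    qed
  qed
  then have "0 \<le> k s" using k0 by simp
  then show ?thesis unfolding k_def psi_def \<kappa>_def t_def
    by (simp add: ln_div algebra_simps)
qed



definition Ssum :: "nat \<Rightarrow> (nat \<Rightarrow> real) \<Rightarrow> real" where
  "Ssum n x = (\<Sum>i<n. x i)"

lemma finite_spins [simp]: "finite (spins n)"
  by (simp add: spins_def finite_PiE)

lemma spins_mem: "x \<in> spins n \<Longrightarrow> i < n \<Longrightarrow> x i = -1 \<or> x i = 1"
  by (auto simp: spins_def PiE_def Pi_def)

lemma spins_sum_prod:
  fixes f :: "nat \<Rightarrow> real \<Rightarrow> real"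
  shows "(\<Sum>x\<in>spins n. \<Prod>i<n. f i (x i)) = (\<Prod>i<n. f i (-1) + f i 1)"
proof -
  have "(\<Prod>i\<in>{0..<n}. \<Sum>y\<in>{-1,1::real}. f i y) = (\<Sum>g\<in>PiE {0..<n} (\<lambda>_. {-1,1}). \<Prod>i\<in>{0..<n}. f i (g i))"
    by (rule prod_sum_PiE) auto
  then show ?thesis by (simp add: spins_def atLeast0LessThan)
qed

lemma spins_sum_exp:
  fixes a :: real
  shows "(\<Sum>x\<in>spins n. exp (a * Ssum n x)) = (2 * cosh a) ^ n"
proof -
  have "(\<Sum>x\<in>spins n. exp (a * Ssum n x)) = (\<Sum>x\<in>spins n. \<Prod>i<n. exp (a * x i))"
    by (simp add: Ssum_def sum_distrib_left exp_sum)
  also have "\<dots> = (\<Prod>i<n. exp (a * -1) + exp (a * 1))" by (rule spins_sum_prod)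
  also have "\<dots> = (2 * cosh a) ^ n"
  proof -
    have "2 * cosh a = exp (a * -1) + exp (a * 1)" by (simp add: cosh_field_def)
    then show ?thesis by simp
  qed
  finally show ?thesis .
qed

lemma Q_pmf_exp:
  assumes "t = tanh \<theta>" "x \<in> spins n"
  shows "Q_pmf n t x = exp (\<theta> * Ssum n x) / (2 * cosh \<theta>) ^ n"
proof -
  have c: "cosh \<theta> > 0" by simp
  have fac: "(if x i = 1 then (1 + t) / 2 else (1 - t) / 2) = exp (\<theta> * x i) / (2 * cosh \<theta>)" if "i < n" for i
  proof -
    have "(1 + t) / 2 = (cosh \<theta> + sinh \<theta>) / (2 * cosh \<theta>)"
      using c by (simp add: assms(1) tanh_def field_simps)
    then have p: "(1 + t) / 2 = exp \<theta> / (2 * cosh \<theta>)" by (simp only: cosh_plus_sinh)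
    have "(1 - t) / 2 = (cosh \<theta> - sinh \<theta>) / (2 * cosh \<theta>)"
      using c by (simp add: assms(1) tanh_def field_simps)
    then have m: "(1 - t) / 2 = exp (-\<theta>) / (2 * cosh \<theta>)" by (simp only: cosh_minus_sinh)
    from spins_mem[OF assms(2) that] show ?thesis using p m by auto
  qed
  have "Q_pmf n t x = (\<Prod>i<n. exp (\<theta> * x i) / (2 * cosh \<theta>))"
    unfolding Q_pmf_def using fac by (intro prod.cong) auto
  also have "\<dots> = exp (\<theta> * Ssum n x) / (2 * cosh \<theta>) ^ n"
    by (simp add: prod_dividef Ssum_def sum_distrib_left exp_sum)
  finally show ?thesis .
qed

lemma Q_mgf:
  assumes "t = tanh \<theta>"
  shows "(\<Sum>x\<in>spins n. Q_pmf n t x * exp (s * Ssum n x)) = (cosh (\<theta> + s) / cosh \<theta>) ^ n"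
proof -
  have "(\<Sum>x\<in>spins n. Q_pmf n t x * exp (s * Ssum n x)) = (\<Sum>x\<in>spins n. exp ((\<theta> + s) * Ssum n x) / (2 * cosh \<theta>) ^ n)"
    by (intro sum.cong refl) (simp add: Q_pmf_exp[OF assms] distrib_right exp_add)
  also have "\<dots> = (2 * cosh (\<theta> + s)) ^ n / (2 * cosh \<theta>) ^ n"
    by (simp add: sum_divide_distrib[symmetric] spins_sum_exp)
  also have "\<dots> = (cosh (\<theta> + s) / cosh \<theta>) ^ n" by (simp add: power_divide)
  finally show ?thesis .
qed

lemma Q_total: assumes "t = tanh \<theta>" shows "(\<Sum>x\<in>spins n. Q_pmf n t x) = 1"
  using Q_mgf[OF assms, of n 0] by simp

lemma Q_nonneg: assumes "-1 < t" "t < 1" shows "0 \<le> Q_pmf n t x"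
  using assms unfolding Q_pmf_def by (intro prod_nonneg) auto

lemma Q_pos: assumes "-1 < t" "t < 1" shows "0 < Q_pmf n t x"
  using assms unfolding Q_pmf_def by (intro prod_pos) auto



lemma markov_exp:
  fixes w g :: "'a \<Rightarrow> real"
  assumes "finite A" "\<And>x. x \<in> A \<Longrightarrow> 0 \<le> w x"
  shows "(\<Sum>x\<in>{x\<in>A. c \<le> g x}. w x) \<le> (\<Sum>x\<in>A. w x * exp (g x - c))"
proof -
  have "(\<Sum>x\<in>{x\<in>A. c \<le> g x}. w x) \<le> (\<Sum>x\<in>{x\<in>A. c \<le> g x}. w x * exp (g x - c))"
  proof (intro sum_mono)
    fix x assume "x \<in> {x\<in>A. c \<le> g x}"
    then have "w x \<ge> 0" "1 \<le> exp (g x - c)" using assms by auto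
    then show "w x \<le> w x * exp (g x - c)" by (metis mult_left_mono mult.right_neutral)
  qed
  also have "\<dots> \<le> (\<Sum>x\<in>A. w x * exp (g x - c))"
    using assms by (intro sum_mono2) auto
  finally show ?thesis .
qed

locale cw =
  fixes \<theta> t :: real
  assumes th: "0 < \<theta>" and tt: "t = tanh \<theta>"
begin

definition \<kappa> where "\<kappa> = t / \<theta>"
definition D where "D n x = Ssum n x - real n * t"

lemma t_pos: "0 < t" using th tt by simp
lemma t_lt1: "t < 1" using tt tanh_real_lt_1 by simp
lemma kappa_pos: "0 < \<kappa>" using t_pos th by (simp add: \<kappa>_def)
lemma kappa_theta: "\<kappa> * \<theta> = t" using th by (simp add: \<kappa>_def)

lemma Qnn: "0 \<le> Q_pmf n t x" using t_pos t_lt1 by (intro Q_nonneg) auto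

lemma mgf_D: assumes "- \<theta> \<le> s"
  shows "(\<Sum>x\<in>spins n. Q_pmf n t x * exp (s * D n x)) \<le> exp (real n * (\<kappa> * s^2 / 2))"
proof -
  have "(\<Sum>x\<in>spins n. Q_pmf n t x * exp (s * D n x))
      = (\<Sum>x\<in>spins n. Q_pmf n t x * exp (s * Ssum n x)) * exp (- s * real n * t)"
    unfolding sum_distrib_right
  proof (intro sum.cong refl)
    fix x
    have "exp (s * D n x) = exp (s * Ssum n x) * exp (- s * real n * t)"
      by (simp add: D_def algebra_simps exp_add[symmetric])
    then show "Q_pmf n t x * exp (s * D n x) = Q_pmf n t x * exp (s * Ssum n x) * exp (- s * real n * t)" by simp
  qed
  also have "\<dots> = (cosh (\<theta> + s) / cosh \<theta>) ^ n * exp (- s * real n * t)"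
    by (simp add: Q_mgf[OF tt])
  also have "\<dots> = exp (real n * psi \<theta> s)"
  proof -
    have pos: "cosh (\<theta> + s) / cosh \<theta> > 0" by simp
    have "(cosh (\<theta> + s) / cosh \<theta>) ^ n = exp (real n * ln (cosh (\<theta> + s) / cosh \<theta>))"
      using pos by (simp add: exp_of_nat_mult)
    then show ?thesis by (simp add: psi_def tt[symmetric] exp_add[symmetric] algebra_simps)
  qed
  also have "\<dots> \<le> exp (real n * (\<kappa> * s^2 / 2))"
  proof -
    have "psi \<theta> s \<le> \<kappa> * s^2 / 2" using psi_bound[OF th assms, folded tt] by (simp add: \<kappa>_def)
    then have "real n * psi \<theta> s \<le> real n * (\<kappa> * s^2 / 2)" by (intro mult_left_mono) auto
    then show ?thesis by simp
  qed
  finally show ?thesis .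
qed

lemma tail_up: assumes "0 \<le> u" "0 < n"
  shows "(\<Sum>x\<in>{x\<in>spins n. u \<le> D n x}. Q_pmf n t x) \<le> exp (- (u^2) / (2 * \<kappa> * real n))"
proof -
  define s where "s = u / (\<kappa> * real n)"
  have s0: "0 \<le> s" using assms kappa_pos by (simp add: s_def)
  have "(\<Sum>x\<in>{x\<in>spins n. s * u \<le> s * D n x}. Q_pmf n t x) \<le> (\<Sum>x\<in>spins n. Q_pmf n t x * exp (s * D n x - s * u))"
    by (rule markov_exp) (auto simp: Qnn)
  moreover have "{x\<in>spins n. u \<le> D n x} \<subseteq> {x\<in>spins n. s * u \<le> s * D n x}"
    using s0 by (auto intro: mult_left_mono)
  then have "(\<Sum>x\<in>{x\<in>spins n. u \<le> D n x}. Q_pmf n t x) \<le> (\<Sum>x\<in>{x\<in>spins n. s * u \<le> s * D n x}. Q_pmf n t x)"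
    by (intro sum_mono2) (auto simp: Qnn)
  moreover have "(\<Sum>x\<in>spins n. Q_pmf n t x * exp (s * D n x - s * u)) = (\<Sum>x\<in>spins n. Q_pmf n t x * exp (s * D n x)) * exp (- (s * u))"
    unfolding sum_distrib_right
    by (intro sum.cong refl) (simp add: mult.assoc exp_add[symmetric])
  moreover have "\<dots> \<le> exp (real n * (\<kappa> * s^2 / 2)) * exp (- (s * u))"
    using mgf_D[of s n] s0 th by (intro mult_right_mono) auto
  moreover have "exp (real n * (\<kappa> * s^2 / 2)) * exp (- (s * u)) = exp (- (u^2) / (2 * \<kappa> * real n))"
  proof -
    have "real n * (\<kappa> * s^2 / 2) - s * u = - (u^2) / (2 * \<kappa> * real n)"
      using assms kappa_pos unfolding s_def by (simp add: field_simps power2_eq_square)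
    then show ?thesis by (simp add: exp_add[symmetric])
  qed
  ultimately show ?thesis by linarith
qed

lemma tail_down: assumes "0 \<le> u" "0 < n" "u \<le> real n * t"
  shows "(\<Sum>x\<in>{x\<in>spins n. D n x \<le> - u}. Q_pmf n t x) \<le> exp (- (u^2) / (2 * \<kappa> * real n))"
proof -
  define s where "s = - u / (\<kappa> * real n)"
  have s0: "s \<le> 0" using assms kappa_pos by (simp add: s_def divide_nonneg_pos)
  have sth: "- \<theta> \<le> s"
  proof -
    have "u / (\<kappa> * real n) \<le> real n * t / (\<kappa> * real n)"
      using assms kappa_pos by (intro divide_right_mono) auto
    also have "\<dots> = \<theta>" using assms kappa_theta kappa_pos th by (simp add: field_simps)
    finally show ?thesis by (simp add: s_def)
  qed
  have "(\<Sum>x\<in>{x\<in>spins n. s * (-u) \<le> s * D n x}. Q_pmf n t x) \<le> (\<Sum>x\<in>spins n. Q_pmf n t x * exp (s * D n x - s * (-u)))"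
    by (rule markov_exp) (auto simp: Qnn)
  moreover have "{x\<in>spins n. D n x \<le> - u} \<subseteq> {x\<in>spins n. s * (-u) \<le> s * D n x}"
  proof
    fix x assume x: "x \<in> {x\<in>spins n. D n x \<le> - u}"
    then have "0 \<le> (-s) * (-u - D n x)" using s0 by (intro mult_nonneg_nonneg) auto
    then show "x \<in> {x\<in>spins n. s * (-u) \<le> s * D n x}" using x by (simp add: algebra_simps)
  qed
  then have "(\<Sum>x\<in>{x\<in>spins n. D n x \<le> - u}. Q_pmf n t x) \<le> (\<Sum>x\<in>{x\<in>spins n. s * (-u) \<le> s * D n x}. Q_pmf n t x)"
    by (intro sum_mono2) (auto simp: Qnn)
  moreover have "(\<Sum>x\<in>spins n. Q_pmf n t x * exp (s * D n x - s * (-u))) = (\<Sum>x\<in>spins n. Q_pmf n t x * exp (s * D n x)) * exp (s * u)"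
    unfolding sum_distrib_right
    by (intro sum.cong refl) (simp add: mult.assoc exp_add[symmetric])
  moreover have "\<dots> \<le> exp (real n * (\<kappa> * s^2 / 2)) * exp (s * u)"
    using mgf_D[OF sth, of n] by (intro mult_right_mono) auto
  moreover have "exp (real n * (\<kappa> * s^2 / 2)) * exp (s * u) = exp (- (u^2) / (2 * \<kappa> * real n))"
  proof -
    have "real n * (\<kappa> * s^2 / 2) + s * u = - (u^2) / (2 * \<kappa> * real n)"
      using assms kappa_pos unfolding s_def by (simp add: field_simps power2_eq_square)
    then show ?thesis by (simp add: exp_add[symmetric])
  qed
  ultimately show ?thesis by linarith
qed

end



definition negs :: "nat \<Rightarrow> (nat \<Rightarrow> real) \<Rightarrow> nat \<Rightarrow> real" where
  "negs n x = (\<lambda>i. if i < n then - x i else undefined)"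

lemma negs_spins: "x \<in> spins n \<Longrightarrow> negs n x \<in> spins n"
  by (auto simp: spins_def negs_def PiE_def Pi_def extensional_def)

lemma negs_negs: "x \<in> spins n \<Longrightarrow> negs n (negs n x) = x"
  by (auto simp: spins_def negs_def PiE_def extensional_def fun_eq_iff)

lemma Ssum_negs: "Ssum n (negs n x) = - Ssum n x"
  by (simp add: Ssum_def negs_def sum_negf)

lemma abs_Ssum: assumes "x \<in> spins n" shows "\<bar>Ssum n x\<bar> \<le> real n"
proof -
  have "\<bar>Ssum n x\<bar> \<le> (\<Sum>i<n. \<bar>x i\<bar>)" unfolding Ssum_def by (rule sum_abs)
  also have "\<dots> = (\<Sum>i<n. 1)" using spins_mem[OF assms] by (intro sum.cong refl) force
  finally show ?thesis by simp
qed

lemma sum_Un_le: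
  fixes f :: "'a \<Rightarrow> real"
  assumes "finite A" "finite B" "\<And>x. x \<in> A \<union> B \<Longrightarrow> 0 \<le> f x"
  shows "sum f (A \<union> B) \<le> sum f A + sum f B"
proof -
  have "0 \<le> sum f (A \<inter> B)" using assms by (intro sum_nonneg) auto
  then show ?thesis using sum_Un[OF assms(1,2), of f] by linarith
qed

context cw
begin

lemma Q_negs: assumes "x \<in> spins n" shows "Q_pmf n t (negs n x) = Q_pmf n t x * exp (- 2 * \<theta> * Ssum n x)"
  using Q_pmf_exp[OF tt assms] Q_pmf_exp[OF tt negs_spins[OF assms]]
  by (simp add: Ssum_negs exp_add[symmetric] algebra_simps)

lemma two_lam: assumes "0 < lm" "2 * lm * \<kappa> < 1" shows "2 * lm * t \<le> \<theta>"
proof -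
  have "2 * lm * t = (2 * lm * \<kappa>) * \<theta>" using kappa_theta by (simp add: algebra_simps)
  also have "\<dots> \<le> 1 * \<theta>" using assms th by (intro mult_right_mono) auto
  finally show ?thesis by simp
qed

lemma flip_step:
  assumes "0 < lm" "2 * lm * \<kappa> < 1" "0 < n"
  shows "(\<Sum>x\<in>spins n. Q_pmf n t x * exp (lm * (D n x)^2 / real n))
         \<le> 2 * (\<Sum>x\<in>{x\<in>spins n. 0 \<le> Ssum n x}. Q_pmf n t x * exp (lm * (D n x)^2 / real n))"
proof -
  define g where "g x = Q_pmf n t x * exp (lm * (D n x)^2 / real n)" for x
  have gnn: "0 \<le> g x" for x by (simp add: g_def Qnn)
  have split: "sum g (spins n) = sum g {x\<in>spins n. 0 \<le> Ssum n x} + sum g {x\<in>spins n. Ssum n x < 0}"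
  proof -
    have "sum g (spins n) = sum g (spins n \<inter> {x. 0 \<le> Ssum n x}) + sum g (spins n - {x. 0 \<le> Ssum n x})"
      by (rule sum.Int_Diff) simp
    moreover have "spins n \<inter> {x. 0 \<le> Ssum n x} = {x\<in>spins n. 0 \<le> Ssum n x}" by auto
    moreover have "spins n - {x. 0 \<le> Ssum n x} = {x\<in>spins n. Ssum n x < 0}" by auto
    ultimately show ?thesis by simp
  qed
  have reidx: "sum g {x\<in>spins n. Ssum n x < 0} = sum (\<lambda>y. g (negs n y)) {y\<in>spins n. 0 < Ssum n y}"
    by (rule sum.reindex_bij_witness[where i = "negs n" and j = "negs n"])
       (auto simp: negs_negs negs_spins Ssum_negs)
  have le: "g (negs n y) \<le> g y" if y: "y \<in> spins n" "0 \<le> Ssum n y" for y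
  proof -
    have D: "D n (negs n y) = - Ssum n y - real n * t" by (simp add: D_def Ssum_negs)
    have "- 2 * \<theta> * Ssum n y + lm * (D n (negs n y))^2 / real n \<le> lm * (D n y)^2 / real n"
    proof -
      have "- 2 * \<theta> * Ssum n y + lm * (D n (negs n y))^2 / real n - lm * (D n y)^2 / real n
            = - 2 * Ssum n y * (\<theta> - 2 * lm * t)"
        using assms(3) by (simp add: D_def Ssum_negs field_simps power2_eq_square)
      also have "\<dots> \<le> 0" using two_lam[OF assms(1,2)] y(2) by (simp add: mult_nonneg_nonneg)
      finally show ?thesis by simp
    qed
    then have "exp (- 2 * \<theta> * Ssum n y + lm * (D n (negs n y))^2 / real n) \<le> exp (lm * (D n y)^2 / real n)"
      by simp
    then have "Q_pmf n t y * exp (- 2 * \<theta> * Ssum n y + lm * (D n (negs n y))^2 / real n) \<le> Q_pmf n t y * exp (lm * (D n y)^2 / real n)"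
      by (intro mult_left_mono) (auto simp: Qnn)
    then show ?thesis unfolding g_def Q_negs[OF y(1)] by (simp add: exp_add[symmetric] mult.assoc)
  qed
  have "sum (\<lambda>y. g (negs n y)) {y\<in>spins n. 0 < Ssum n y} \<le> sum g {y\<in>spins n. 0 < Ssum n y}"
    by (intro sum_mono le) auto
  also have "\<dots> \<le> sum g {x\<in>spins n. 0 \<le> Ssum n x}"
    by (intro sum_mono2) (auto simp: gnn)
  finally show ?thesis using split reidx unfolding g_def by linarith
qed

end



context cw
begin

lemma abs_D: assumes "x \<in> spins n" shows "\<bar>D n x\<bar> \<le> 2 * real n"
proof -
  have "\<bar>D n x\<bar> \<le> \<bar>Ssum n x\<bar> + real n * t" using t_pos abs_triangle_ineq4[of "Ssum n x" "real n * t"] unfolding D_def by simp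
  moreover have "real n * t \<le> real n" using t_lt1 t_pos by (simp add: mult_left_le)
  ultimately show ?thesis using abs_Ssum[OF assms] by linarith
qed

lemma shell_point:
  assumes "x \<in> spins n" "0 < n" "0 < lm"
  shows "exp (lm * (D n x)^2 / real n) \<le> (\<Sum>k<2*n+1. exp (lm * (real k + 1)^2) * (if real k * sqrt (real n) \<le> \<bar>D n x\<bar> then 1 else 0))"
proof -
  define a where "a = \<bar>D n x\<bar> / sqrt (real n)"
  have sq: "sqrt (real n) \<ge> 1" using assms by simp
  have a0: "0 \<le> a" by (simp add: a_def)
  have "a \<le> \<bar>D n x\<bar> / 1" unfolding a_def using sq by (intro divide_left_mono) auto
  hence a2n: "a \<le> 2 * real n" using abs_D[OF assms(1)] by linarith
  define k0 where "k0 = nat \<lfloor>a\<rfloor>"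
  have k0a: "real k0 \<le> a" using a0 by (simp add: k0_def)
  have ak0: "a < real k0 + 1" using a0 by (simp add: k0_def)
  have k0K: "k0 < 2*n+1" using k0a a2n by linarith
  have ind: "real k0 * sqrt (real n) \<le> \<bar>D n x\<bar>"
  proof -
    have "real k0 * sqrt (real n) \<le> a * sqrt (real n)" using k0a by (intro mult_right_mono) auto
    also have "\<dots> = \<bar>D n x\<bar>" using sq by (simp add: a_def)
    finally show ?thesis .
  qed
  have "lm * (D n x)^2 / real n = lm * a^2"
    using assms by (simp add: a_def power_divide)
  also have "\<dots> \<le> lm * (real k0 + 1)^2"
    using a0 ak0 assms(3) by (intro mult_left_mono power_mono) auto
  finally have "exp (lm * (D n x)^2 / real n) \<le> exp (lm * (real k0 + 1)^2) * (if real k0 * sqrt (real n) \<le> \<bar>D n x\<bar> then 1 else 0)"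
    using ind by simp
  also have "\<dots> \<le> (\<Sum>k<2*n+1. exp (lm * (real k + 1)^2) * (if real k * sqrt (real n) \<le> \<bar>D n x\<bar> then 1 else 0))"
    by (rule member_le_sum[where f = "\<lambda>k. exp (lm * (real k + 1)^2) * (if real k * sqrt (real n) \<le> \<bar>D n x\<bar> then 1 else 0)"])
       (use k0K in auto)
  finally show ?thesis .
qed

lemma shell_prob:
  assumes "0 < n"
  shows "(\<Sum>x\<in>{x\<in>spins n. 0 \<le> Ssum n x \<and> real k * sqrt (real n) \<le> \<bar>D n x\<bar>}. Q_pmf n t x) \<le> 2 * exp (- (real k^2) / (2 * \<kappa>))"
proof -
  define u where "u = real k * sqrt (real n)"
  have u0: "0 \<le> u" by (simp add: u_def)
  have ue: "- (u^2) / (2 * \<kappa> * real n) = - (real k^2) / (2 * \<kappa>)"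
    using assms kappa_pos by (simp add: u_def power_mult_distrib)
  have sub: "{x\<in>spins n. 0 \<le> Ssum n x \<and> u \<le> \<bar>D n x\<bar>} \<subseteq> {x\<in>spins n. u \<le> D n x} \<union> {x\<in>spins n. 0 \<le> Ssum n x \<and> D n x \<le> - u}"
    by auto
  have A: "(\<Sum>x\<in>{x\<in>spins n. u \<le> D n x}. Q_pmf n t x) \<le> exp (- (real k^2) / (2 * \<kappa>))"
    using tail_up[OF u0 assms] ue by simp
  have B: "(\<Sum>x\<in>{x\<in>spins n. 0 \<le> Ssum n x \<and> D n x \<le> - u}. Q_pmf n t x) \<le> exp (- (real k^2) / (2 * \<kappa>))"
  proof (cases "u \<le> real n * t")
    case True
    have "(\<Sum>x\<in>{x\<in>spins n. 0 \<le> Ssum n x \<and> D n x \<le> - u}. Q_pmf n t x) \<le> (\<Sum>x\<in>{x\<in>spins n. D n x \<le> - u}. Q_pmf n t x)"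
      by (intro sum_mono2) (auto simp: Qnn)
    also have "\<dots> \<le> exp (- (real k^2) / (2 * \<kappa>))" using tail_down[OF u0 assms True] ue by simp
    finally show ?thesis .
  next
    case False
    then have e: "{x\<in>spins n. 0 \<le> Ssum n x \<and> D n x \<le> - u} = {}" by (auto simp: D_def)
    show ?thesis unfolding e by simp
  qed
  have "(\<Sum>x\<in>{x\<in>spins n. 0 \<le> Ssum n x \<and> u \<le> \<bar>D n x\<bar>}. Q_pmf n t x)
     \<le> (\<Sum>x\<in>{x\<in>spins n. u \<le> D n x} \<union> {x\<in>spins n. 0 \<le> Ssum n x \<and> D n x \<le> - u}. Q_pmf n t x)"
    by (intro sum_mono2 sub) (auto simp: Qnn)
  also have "\<dots> \<le> (\<Sum>x\<in>{x\<in>spins n. u \<le> D n x}. Q_pmf n t x) + (\<Sum>x\<in>{x\<in>spins n. 0 \<le> Ssum n x \<and> D n x \<le> - u}. Q_pmf n t x)"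
    by (rule sum_Un_le) (auto simp: Qnn)
  finally show ?thesis using A B unfolding u_def by linarith
qed

lemma quad_bound:
  assumes "0 < lm" "2 * lm * \<kappa> < 1"
  shows "lm * (real k + 1)^2 - real k^2 / (2 * \<kappa>) \<le> ((2*lm+1)^2 / (4 * (1 / (2*\<kappa>) - lm)) + lm) - real k"
proof -
  define \<eta> where "\<eta> = 1 / (2*\<kappa>) - lm"
  have eta: "0 < \<eta>" using assms kappa_pos unfolding \<eta>_def by (simp add: field_simps)
  define b where "b = 2*lm+1"
  have "0 \<le> \<eta> * (real k - b / (2*\<eta>))^2" using eta by simp
  also have "\<eta> * (real k - b / (2*\<eta>))^2 = \<eta> * real k^2 - b * real k + b^2/(4*\<eta>)"
    using eta by (simp add: field_simps power2_eq_square)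
  finally have "b * real k - \<eta> * real k^2 \<le> b^2/(4*\<eta>)" by simp
  moreover have "lm * (real k + 1)^2 - real k^2 / (2 * \<kappa>) = b * real k - \<eta> * real k^2 + lm - real k"
    unfolding b_def \<eta>_def by (simp add: field_simps power2_eq_square)
  ultimately show ?thesis unfolding b_def[symmetric] \<eta>_def[symmetric] by linarith
qed

definition C3 :: "real \<Rightarrow> real" where
  "C3 lm = (2*lm+1)^2 / (4 * (1 / (2*\<kappa>) - lm)) + lm"

lemma pos_half_bound:
  assumes "0 < lm" "2 * lm * \<kappa> < 1" "0 < n"
  shows "(\<Sum>x\<in>{x\<in>spins n. 0 \<le> Ssum n x}. Q_pmf n t x * exp (lm * (D n x)^2 / real n))
     \<le> 2 * exp (C3 lm) / (1 - exp (-1))"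
proof -
  define P where "P = {x\<in>spins n. 0 \<le> Ssum n x}"
  define c where "c k = exp (lm * (real k + 1)^2)" for k :: nat
  define ind where "ind k x = (if real k * sqrt (real n) \<le> \<bar>D n x\<bar> then 1 else (0::real))" for k x
  have finP: "finite P" by (simp add: P_def)
  have "(\<Sum>x\<in>P. Q_pmf n t x * exp (lm * (D n x)^2 / real n)) \<le> (\<Sum>x\<in>P. Q_pmf n t x * (\<Sum>k<2*n+1. c k * ind k x))"
  proof (intro sum_mono mult_left_mono)
    fix x assume "x \<in> P"
    then have x: "x \<in> spins n" by (simp add: P_def)
    show "exp (lm * (D n x)^2 / real n) \<le> (\<Sum>k<2*n+1. c k * ind k x)"
      unfolding c_def ind_def by (rule shell_point[OF x assms(3) assms(1)])
  qed (simp add: Qnn)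
  also have "\<dots> = (\<Sum>k<2*n+1. c k * (\<Sum>x\<in>P. Q_pmf n t x * ind k x))"
    unfolding sum_distrib_left by (subst sum.swap) (simp add: mult_ac)
  also have "\<dots> \<le> (\<Sum>k<2*n+1. c k * (2 * exp (- (real k^2) / (2 * \<kappa>))))"
  proof (intro sum_mono mult_left_mono)
    fix k
    have "(\<Sum>x\<in>P. Q_pmf n t x * ind k x) = (\<Sum>x\<in>{x\<in>P. real k * sqrt (real n) \<le> \<bar>D n x\<bar>}. Q_pmf n t x)"
      by (simp add: sum.inter_filter[OF finP] ind_def if_distrib cong: if_cong)
    also have "{x\<in>P. real k * sqrt (real n) \<le> \<bar>D n x\<bar>} = {x\<in>spins n. 0 \<le> Ssum n x \<and> real k * sqrt (real n) \<le> \<bar>D n x\<bar>}"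
      by (auto simp: P_def)
    finally show "(\<Sum>x\<in>P. Q_pmf n t x * ind k x) \<le> 2 * exp (- (real k^2) / (2 * \<kappa>))"
      using shell_prob[OF assms(3), of k] by simp
  qed (simp add: c_def)
  also have "\<dots> \<le> (\<Sum>k<2*n+1. 2 * exp (C3 lm) * exp (-1) ^ k)"
  proof (intro sum_mono)
    fix k
    have "c k * (2 * exp (- (real k^2) / (2 * \<kappa>))) = 2 * exp (lm * (real k + 1)^2 - real k^2 / (2 * \<kappa>))"
      by (simp add: c_def exp_diff exp_minus field_simps)
    also have "\<dots> \<le> 2 * exp (C3 lm - real k)"
      using quad_bound[OF assms(1,2), of k] unfolding C3_def by simp
    also have "\<dots> = 2 * exp (C3 lm) * exp (-1) ^ k"
      by (simp add: exp_diff exp_minus exp_of_nat_mult[symmetric] field_simps)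
    finally show "c k * (2 * exp (- (real k^2) / (2 * \<kappa>))) \<le> 2 * exp (C3 lm) * exp (-1) ^ k" .
  qed
  also have "\<dots> = 2 * exp (C3 lm) * (\<Sum>k<2*n+1. exp (-1) ^ k)"
    by (rule sum_distrib_left[symmetric])
  also have "\<dots> \<le> 2 * exp (C3 lm) * (1 / (1 - exp (-1)))"
  proof (intro mult_left_mono)
    have e1: "exp (-1::real) < 1" by simp
    have "(\<Sum>k<2*n+1. exp (-1::real) ^ k) = (1 - exp (-1) ^ (2*n+1)) / (1 - exp (-1))"
    proof -
      have gp: "(\<Sum>k<m. exp (-1::real) ^ k) = (1 - exp (-1) ^ m) / (1 - exp (-1))" for m
        using e1 sum_gp_strict[of "exp (-1::real)" m] by simp
      show ?thesis by (rule gp)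
    qed
    also have "\<dots> \<le> 1 / (1 - exp (-1))"
      using e1 by (intro divide_right_mono) auto
    finally show "(\<Sum>k<2*n+1. exp (-1::real) ^ k) \<le> 1 / (1 - exp (-1))" .
  qed simp
  finally show ?thesis by (simp add: P_def)
qed

lemma exp_moment:
  assumes "0 < lm" "2 * lm * \<kappa> < 1" "0 < n"
  shows "(\<Sum>x\<in>spins n. Q_pmf n t x * exp (lm * (D n x)^2 / real n)) \<le> 4 * exp (C3 lm) / (1 - exp (-1))"
  using flip_step[OF assms] pos_half_bound[OF assms] by linarith

end



lemma exp_le_quad: fixes u :: real assumes "\<bar>u\<bar> \<le> 1" shows "exp u \<le> 1 + u + u^2"
proof (cases "0 \<le> u")
  case True then show ?thesis using exp_bound[of u] assms by simp
next
  case False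
  then have u: "u < 0" by simp
  have "1 - u \<le> exp (-u)" using exp_ge_add_one_self[of "-u"] by simp
  then have "exp u \<le> 1 / (1 - u)" using u by (simp add: exp_minus field_simps)
  also have "\<dots> \<le> 1 + u + u^2"
  proof -
    have "1 \<le> (1 - u) * (1 + u + u^2)"
    proof -
      have "(1 - u) * (1 + u + u^2) = 1 - u^3" by (simp add: algebra_simps power2_eq_square power3_eq_cube)
      moreover have "u^3 \<le> 0" using u by (simp add: odd_power_less_zero less_imp_le)
      ultimately show ?thesis by simp
    qed
    then show ?thesis using u by (simp add: divide_le_eq mult.commute)
  qed
  finally show ?thesis .
qed

lemma bern_exp_bound: fixes u p :: real assumes "\<bar>u\<bar> \<le> 1" "0 \<le> p"
  shows "p * exp u + (1 - p) \<le> exp (p * u + p * u^2)"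
proof -
  have "p * exp u + (1 - p) = 1 + p * (exp u - 1)" by (simp add: algebra_simps)
  also have "\<dots> \<le> 1 + p * (u + u^2)" using exp_le_quad[OF assms(1)] assms(2) by (intro add_left_mono mult_left_mono) auto
  also have "\<dots> \<le> exp (p * u + p * u^2)" using exp_ge_add_one_self[of "p * (u + u^2)"] by (simp add: algebra_simps)
  finally show ?thesis .
qed

lemma edge_slots_sub: "edge_slots n \<subseteq> {..<n} \<times> {..<n}"
  by (auto simp: edge_slots_def)

lemma finite_edge_slots [simp]: "finite (edge_slots n)"
  by (rule finite_subset[OF edge_slots_sub]) auto

definition Esum :: "(nat \<times> nat) set \<Rightarrow> (nat \<Rightarrow> real) \<Rightarrow> real" where
  "Esum G x = (\<Sum>e\<in>G. x (fst e) * x (snd e))"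

lemma adj_quad:
  assumes G: "G \<subseteq> edge_slots n"
  shows "(\<Sum>i<n. \<Sum>j<n. x i * adj G i j * x j) = 2 * Esum G x"
proof -
  define Bx where "Bx = {..<n} \<times> {..<n}"
  have finB: "finite Bx" by (simp add: Bx_def)
  have GB: "G \<subseteq> Bx" using G edge_slots_sub unfolding Bx_def by blast
  define f where "f e = x (fst e) * x (snd e)" for e
  have adj_split: "adj G i j = (if (i,j) \<in> G then 1 else 0) + (if (j,i) \<in> G then 1 else 0)" for i j
  proof -
    have "\<not> ((i,j) \<in> G \<and> (j,i) \<in> G)"
    proof
      assume "(i,j) \<in> G \<and> (j,i) \<in> G"
      then have "(i,j) \<in> edge_slots n" "(j,i) \<in> edge_slots n" using G by auto
      then show False by (simp add: edge_slots_def)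
    qed
    then show ?thesis by (auto simp: adj_def)
  qed
  have "(\<Sum>i<n. \<Sum>j<n. x i * adj G i j * x j) = (\<Sum>e\<in>Bx. x (fst e) * adj G (fst e) (snd e) * x (snd e))"
    unfolding Bx_def by (simp add: sum.cartesian_product split_def)
  also have "\<dots> = (\<Sum>e\<in>Bx. if e \<in> G then f e else 0) + (\<Sum>e\<in>Bx. if (snd e, fst e) \<in> G then f e else 0)"
    unfolding sum.distrib[symmetric] by (intro sum.cong refl) (auto simp: adj_split f_def)
  also have "(\<Sum>e\<in>Bx. if e \<in> G then f e else 0) = sum f G"
    using GB sum.inter_restrict[OF finB, of f G] by (simp add: Int_absorb1)
  also have "(\<Sum>e\<in>Bx. if (snd e, fst e) \<in> G then f e else 0) = (\<Sum>e\<in>Bx. if e \<in> G then f e else 0)"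
    by (rule sum.reindex_bij_witness[where i = "\<lambda>(a,b). (b,a)" and j = "\<lambda>(a,b). (b,a)"])
       (auto simp: Bx_def f_def)
  also have "\<dots> = sum f G"
    using GB sum.inter_restrict[OF finB, of f G] by (simp add: Int_absorb1)
  finally show ?thesis by (simp add: Esum_def f_def)
qed

lemma adj_slots: "i < n \<Longrightarrow> j < n \<Longrightarrow> adj (edge_slots n) i j = (if i = j then 0 else 1)"
  by (auto simp: adj_def edge_slots_def)

lemma Esum_slots: "2 * Esum (edge_slots n) x = (Ssum n x)^2 - (\<Sum>i<n. (x i)^2)"
proof -
  have "2 * Esum (edge_slots n) x = (\<Sum>i<n. \<Sum>j<n. x i * adj (edge_slots n) i j * x j)"
    by (simp add: adj_quad)
  also have "\<dots> = (\<Sum>i<n. (\<Sum>j<n. x i * x j) - x i * x i)"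
  proof (intro sum.cong refl)
    fix i assume i: "i \<in> {..<n}"
    have "(\<Sum>j<n. x i * adj (edge_slots n) i j * x j) = (\<Sum>j<n. x i * x j - (if i = j then x i * x j else 0))"
      using i by (intro sum.cong refl) (auto simp: adj_slots)
    also have "\<dots> = (\<Sum>j<n. x i * x j) - x i * x i"
      using i by (simp add: sum_subtractf)
    finally show "(\<Sum>j<n. x i * adj (edge_slots n) i j * x j) = (\<Sum>j<n. x i * x j) - x i * x i" .
  qed
  also have "\<dots> = (Ssum n x)^2 - (\<Sum>i<n. (x i)^2)"
    by (simp add: sum_subtractf Ssum_def power2_eq_square sum_product)
  finally show ?thesis .
qed

lemma card_slots: "2 * real (card (edge_slots n)) = real n * (real n - 1)"
proof -
  have "2 * Esum (edge_slots n) (\<lambda>_. 1) = real n * (real n - 1)"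
    using Esum_slots[of n "\<lambda>_. 1"] by (simp add: Ssum_def power2_eq_square algebra_simps)
  then show ?thesis by (simp add: Esum_def)
qed

lemma Esum_slots_spins: "x \<in> spins n \<Longrightarrow> 2 * Esum (edge_slots n) x = (Ssum n x)^2 - real n"
proof -
  assume x: "x \<in> spins n"
  have "(\<Sum>i<n. (x i)^2) = (\<Sum>i<n. 1)" using spins_mem[OF x] by (intro sum.cong refl) force
  then show ?thesis using Esum_slots[of n x] by simp
qed

lemma er_avg:
  fixes w :: "nat \<times> nat \<Rightarrow> real"
  shows "(\<Sum>G\<in>Pow (edge_slots n). er_pmf n p G * (\<Prod>e\<in>G. w e)) = (\<Prod>e\<in>edge_slots n. p * w e + (1 - p))"
proof -
  have "(\<Prod>e\<in>edge_slots n. p * w e + (1 - p)) = (\<Sum>X\<in>Pow (edge_slots n). (\<Prod>e\<in>X. p * w e) * (\<Prod>e\<in>edge_slots n - X. 1 - p))"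
    by (rule prod_add) simp
  also have "\<dots> = (\<Sum>G\<in>Pow (edge_slots n). er_pmf n p G * (\<Prod>e\<in>G. w e))"
  proof (intro sum.cong refl)
    fix X assume X: "X \<in> Pow (edge_slots n)"
    then have finX: "finite X" using finite_subset[of X "edge_slots n"] by auto
    have "card (edge_slots n - X) = card (edge_slots n) - card X"
      using X by (intro card_Diff_subset) (auto intro: finite_subset)
    then show "(\<Prod>e\<in>X. p * w e) * (\<Prod>e\<in>edge_slots n - X. 1 - p) = er_pmf n p X * (\<Prod>e\<in>X. w e)"
      by (simp add: er_pmf_def prod.distrib)
  qed
  finally show ?thesis by simp
qed

lemma er_total: "(\<Sum>G\<in>Pow (edge_slots n). er_pmf n p G) = 1"
  using er_avg[of n p "\<lambda>_. 1"] by simp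

lemma er_nonneg: "0 \<le> p \<Longrightarrow> p \<le> 1 \<Longrightarrow> 0 \<le> er_pmf n p G"
  by (simp add: er_pmf_def)



locale model = cw +
  fixes p \<beta> B :: real
  assumes p0: "0 < p" and p1: "p \<le> 1" and b0: "0 < \<beta>" and B0: "0 < B"
    and thdef: "\<theta> = \<beta> * t + B"
begin

definition cpl where "cpl n = (real n - 1) * p"
definition F where "F n G x = ising_energy n (coupling n p G) \<beta> B x - \<theta> * Ssum n x"

lemma energy_eq:
  assumes "G \<subseteq> edge_slots n"
  shows "ising_energy n (coupling n p G) \<beta> B x = \<beta> / cpl n * Esum G x + B * Ssum n x"
proof -
  have "(\<Sum>i<n. \<Sum>j<n. x i * coupling n p G i j * x j) = (\<Sum>i<n. \<Sum>j<n. x i * adj G i j * x j) / cpl n"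
    by (simp add: coupling_def cpl_def sum_divide_distrib)
  also have "\<dots> = 2 * Esum G x / cpl n" by (simp add: adj_quad[OF assms])
  finally show ?thesis by (simp add: ising_energy_def Ssum_def)
qed

lemma F_eq: "G \<subseteq> edge_slots n \<Longrightarrow> F n G x = \<beta> / cpl n * Esum G x - \<beta> * t * Ssum n x"
  by (simp add: F_def energy_eq) (simp add: thdef algebra_simps)

lemma Gavg:
  assumes n2: "2 \<le> n" and small: "\<beta> / cpl n \<le> 1" and x: "x \<in> spins n" and sg: "\<bar>\<sigma>\<bar> = 1"
  shows "(\<Sum>G\<in>Pow (edge_slots n). er_pmf n p G * exp (\<sigma> * F n G x))
     \<le> exp (\<sigma> * (\<beta> * ((Ssum n x)^2 - real n) / (2 * (real n - 1)) - \<beta> * t * Ssum n x) + real n * \<beta>^2 / (2 * (real n - 1) * p))"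
proof -
  define c where "c = cpl n"
  have cpos: "0 < c" using n2 p0 by (simp add: c_def cpl_def)
  define u where "u e = \<sigma> * (\<beta> / c) * (x (fst e) * x (snd e))" for e
  have xx: "(x (fst e) * x (snd e))^2 = 1" if "e \<in> edge_slots n" for e
  proof -
    have "fst e < n" "snd e < n" using that by (auto simp: edge_slots_def)
    then show ?thesis using spins_mem[OF x, of "fst e"] spins_mem[OF x, of "snd e"] by auto
  qed
  have usq: "(u e)^2 = (\<beta>/c)^2" if "e \<in> edge_slots n" for e
  proof -
    have "\<sigma>^2 = \<bar>\<sigma>\<bar>^2" by simp
    then have "\<sigma>^2 = 1" using sg by simp
    moreover have "(u e)^2 = \<sigma>^2 * (\<beta>/c)^2 * (x (fst e) * x (snd e))^2"
      unfolding u_def by (simp only: power_mult_distrib)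
    ultimately show ?thesis using xx[OF that] by simp
  qed
  have uabs: "\<bar>u e\<bar> \<le> 1" if "e \<in> edge_slots n" for e
  proof -
    have sq: "\<bar>u e\<bar>^2 = (\<beta>/c)^2" using usq[OF that] by simp
    have "\<bar>u e\<bar> = \<beta>/c" using power2_eq_iff_nonneg[of "\<bar>u e\<bar>" "\<beta>/c"] sq b0 cpos by simp
    then show ?thesis using small by (simp add: c_def)
  qed
  have eF: "exp (\<sigma> * F n G x) = exp (- \<sigma> * \<beta> * t * Ssum n x) * (\<Prod>e\<in>G. exp (u e))" if "G \<in> Pow (edge_slots n)" for G
  proof -
    have G: "G \<subseteq> edge_slots n" using that by simp
    have finG: "finite G" using G by (rule finite_subset) simp
    have pe: "(\<Prod>e\<in>G. exp (u e)) = exp (\<Sum>e\<in>G. u e)" using finG by (simp add: exp_sum)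
    have su: "(\<Sum>e\<in>G. u e) = \<sigma> * (\<beta> / c) * Esum G x" by (simp add: u_def Esum_def sum_distrib_left)
    have e1: "\<sigma> * F n G x = - \<sigma> * \<beta> * t * Ssum n x + (\<Sum>e\<in>G. u e)"
      unfolding su F_eq[OF G] c_def by (simp add: algebra_simps)
    show ?thesis unfolding e1 pe by (simp add: exp_add[symmetric])
  qed
  have "(\<Sum>G\<in>Pow (edge_slots n). er_pmf n p G * exp (\<sigma> * F n G x))
      = exp (- \<sigma> * \<beta> * t * Ssum n x) * (\<Sum>G\<in>Pow (edge_slots n). er_pmf n p G * (\<Prod>e\<in>G. exp (u e)))"
    unfolding sum_distrib_left by (intro sum.cong refl) (simp add: eF)
  also have "\<dots> = exp (- \<sigma> * \<beta> * t * Ssum n x) * (\<Prod>e\<in>edge_slots n. p * exp (u e) + (1 - p))"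
    by (simp add: er_avg)
  also have "\<dots> \<le> exp (- \<sigma> * \<beta> * t * Ssum n x) * (\<Prod>e\<in>edge_slots n. exp (p * u e + p * (\<beta>/c)^2))"
  proof (intro mult_left_mono prod_mono conjI)
    fix e assume e: "e \<in> edge_slots n"
    show "0 \<le> p * exp (u e) + (1 - p)" using p0 p1 by (simp add: add_nonneg_nonneg)
    show "p * exp (u e) + (1 - p) \<le> exp (p * u e + p * (\<beta>/c)^2)"
      using bern_exp_bound[OF uabs[OF e], of p] p0 usq[OF e] by simp
  qed simp
  also have "\<dots> = exp (- \<sigma> * \<beta> * t * Ssum n x + (p * \<sigma> * (\<beta> / c) * Esum (edge_slots n) x + real (card (edge_slots n)) * (p * (\<beta>/c)^2)))"
  proof -
    have "(\<Prod>e\<in>edge_slots n. exp (p * u e + p * (\<beta>/c)^2)) = exp (\<Sum>e\<in>edge_slots n. p * u e + p * (\<beta>/c)^2)"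
      by (simp add: exp_sum)
    moreover have "(\<Sum>e\<in>edge_slots n. p * u e + p * (\<beta>/c)^2) = p * \<sigma> * (\<beta> / c) * Esum (edge_slots n) x + real (card (edge_slots n)) * (p * (\<beta>/c)^2)"
      by (simp add: sum.distrib u_def Esum_def sum_distrib_left mult_ac)
    ultimately show ?thesis by (simp add: exp_add[symmetric])
  qed
  also have "\<dots> = exp (\<sigma> * (\<beta> * ((Ssum n x)^2 - real n) / (2 * (real n - 1)) - \<beta> * t * Ssum n x) + real n * \<beta>^2 / (2 * (real n - 1) * p))"
  proof -
    have n1: "real n - 1 > 0" using n2 by simp
    have "p * \<sigma> * (\<beta> / c) * Esum (edge_slots n) x = \<sigma> * (\<beta> * ((Ssum n x)^2 - real n) / (2 * (real n - 1)))"
    proof -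
      have E: "Esum (edge_slots n) x = ((Ssum n x)^2 - real n) / 2" using Esum_slots_spins[OF x] by simp
      have "p * \<sigma> * (\<beta> / ((real n - 1) * p)) = \<sigma> * \<beta> / (real n - 1)" using p0 by simp
      then show ?thesis unfolding E c_def cpl_def by (simp add: mult.commute mult.left_commute)
    qed
    moreover have "real (card (edge_slots n)) * (p * (\<beta>/c)^2) = real n * \<beta>^2 / (2 * (real n - 1) * p)"
    proof -
      have C: "real (card (edge_slots n)) = real n * (real n - 1) / 2" using card_slots[of n] by simp
      show ?thesis unfolding C c_def cpl_def using n1 p0 by (simp add: power2_eq_square)
    qed
    ultimately show ?thesis by (simp add: algebra_simps)
  qed
  finally show ?thesis .
qed

end



context model
begin

definition Mminus where "Mminus n = (\<Sum>x\<in>spins n. Q_pmf n t x * (\<Sum>G\<in>Pow (edge_slots n). er_pmf n p G * exp (- F n G x)))"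
definition Mplus where "Mplus n = (\<Sum>x\<in>spins n. Q_pmf n t x * (\<Sum>G\<in>Pow (edge_slots n). er_pmf n p G * exp (F n G x)))"

lemma t_le1: "t \<le> 1" using t_lt1 by simp

lemma Mminus_bound:
  assumes n2: "2 \<le> n" and small: "\<beta> / cpl n \<le> 1"
  shows "Mminus n \<le> exp (\<beta> * real n * t^2 / 2 + \<beta> + \<beta>^2 / p)"
proof -
  define N where "N = real n - 1"
  have N1: "1 \<le> N" using n2 by (simp add: N_def)
  have pt: "(\<Sum>G\<in>Pow (edge_slots n). er_pmf n p G * exp (- F n G x)) \<le> exp (\<beta> * real n * t^2 / 2 + \<beta> + \<beta>^2 / p)"
    if x: "x \<in> spins n" for x
  proof -
    define S where "S = Ssum n x"
    have "(\<Sum>G\<in>Pow (edge_slots n). er_pmf n p G * exp ((-1) * F n G x))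
       \<le> exp ((-1) * (\<beta> * (S^2 - real n) / (2 * N) - \<beta> * t * S) + real n * \<beta>^2 / (2 * N * p))"
      using Gavg[OF n2 small x, of "-1"] by (simp add: S_def N_def)
    also have "\<dots> \<le> exp (\<beta> * real n * t^2 / 2 + \<beta> + \<beta>^2 / p)"
    proof -
      have a: "- (\<beta> * S^2 / (2 * N)) + \<beta> * t * S \<le> \<beta> * real n * t^2 / 2"
      proof -
        have "0 \<le> \<beta> / (2 * N) * (S - N * t)^2" using b0 N1 by simp
        also have "\<beta> / (2 * N) * (S - N * t)^2 = \<beta> * S^2 / (2 * N) - \<beta> * t * S + \<beta> * N * t^2 / 2"
          using N1 by (simp add: field_simps power2_eq_square)
        finally have "- (\<beta> * S^2 / (2 * N)) + \<beta> * t * S \<le> \<beta> * N * t^2 / 2" by simp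
        also have "\<dots> \<le> \<beta> * real n * t^2 / 2"
        proof -
          have "\<beta> * N * t^2 / 2 = \<beta> * real n * t^2 / 2 - \<beta> * t^2 / 2" by (simp add: N_def field_simps)
          moreover have "0 \<le> \<beta> * t^2" using b0 by simp
          ultimately show ?thesis by simp
        qed
        finally show ?thesis .
      qed
      have b: "\<beta> * real n / (2 * N) \<le> \<beta>"
      proof -
        have "real n / (2 * N) \<le> 1" using N1 n2 by (simp add: N_def field_simps)
        then show ?thesis using b0 mult_left_mono[of "real n / (2 * N)" 1 \<beta>] by simp
      qed
      have c: "real n * \<beta>^2 / (2 * N * p) \<le> \<beta>^2 / p"
      proof -
        have "real n / (2 * N) \<le> 1" using N1 n2 by (simp add: N_def field_simps)
        then have "real n / (2 * N) * (\<beta>^2 / p) \<le> 1 * (\<beta>^2 / p)" using p0 by (intro mult_right_mono) auto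
        then show ?thesis by simp
      qed
      have "(-1) * (\<beta> * (S^2 - real n) / (2 * N) - \<beta> * t * S) = - (\<beta> * S^2 / (2 * N)) + \<beta> * t * S + \<beta> * real n / (2 * N)"
        by (simp add: field_simps) (simp add: diff_divide_distrib)
      then show ?thesis using a b c by simp
    qed
    finally show ?thesis by simp
  qed
  have "Mminus n \<le> (\<Sum>x\<in>spins n. Q_pmf n t x * exp (\<beta> * real n * t^2 / 2 + \<beta> + \<beta>^2 / p))"
    unfolding Mminus_def by (intro sum_mono mult_left_mono pt) (auto simp: Qnn)
  also have "\<dots> = exp (\<beta> * real n * t^2 / 2 + \<beta> + \<beta>^2 / p)"
    by (simp add: sum_distrib_right[symmetric] Q_total[OF tt])
  finally show ?thesis .
qed

lemma Mplus_bound: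
  assumes n2: "2 \<le> n" and small: "\<beta> / cpl n \<le> 1" and d0: "0 < \<delta>" and dn: "1 + \<delta> \<le> \<delta> * real n"
  shows "Mplus n \<le> exp (- (\<beta> * real n * t^2 / 2) + (\<beta> * (1 + 1/\<delta>) + \<beta> + \<beta>^2 / p))
           * (\<Sum>x\<in>spins n. Q_pmf n t x * exp ((\<beta> * (1+\<delta>)^2 / 2) * (D n x)^2 / real n))"
proof -
  define N where "N = real n - 1"
  have N1: "1 \<le> N" using n2 by (simp add: N_def)
  define lm where "lm = \<beta> * (1+\<delta>)^2 / 2"
  define C1 where "C1 = \<beta> * (1 + 1/\<delta>) + \<beta> + \<beta>^2 / p"
  have pt: "(\<Sum>G\<in>Pow (edge_slots n). er_pmf n p G * exp (F n G x)) \<le> exp (- (\<beta> * real n * t^2 / 2) + C1) * exp (lm * (D n x)^2 / real n)"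
    if x: "x \<in> spins n" for x
  proof -
    define S where "S = Ssum n x"
    define Dv where "Dv = D n x"
    have SD: "S - N * t = Dv + t" by (simp add: S_def Dv_def D_def N_def algebra_simps)
    have "(\<Sum>G\<in>Pow (edge_slots n). er_pmf n p G * exp (1 * F n G x))
       \<le> exp (1 * (\<beta> * (S^2 - real n) / (2 * N) - \<beta> * t * S) + real n * \<beta>^2 / (2 * N * p))"
      using Gavg[OF n2 small x, of 1] by (simp add: S_def N_def)
    also have "\<dots> \<le> exp (- (\<beta> * real n * t^2 / 2) + C1 + lm * Dv^2 / real n)"
    proof -
      have i1: "\<beta> * (S^2 - real n) / (2 * N) \<le> \<beta> * S^2 / (2 * N)"
        using b0 N1 by (simp add: divide_right_mono mult_left_mono)
      have i2: "\<beta> * S^2 / (2 * N) - \<beta> * t * S = \<beta> * (Dv + t)^2 / (2 * N) - \<beta> * N * t^2 / 2"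
        unfolding SD[symmetric] using N1 by (simp add: field_simps power2_eq_square)
      have i3: "(Dv + t)^2 \<le> (1 + \<delta>) * Dv^2 + (1 + 1/\<delta>)"
      proof -
        have "0 \<le> (\<delta> * Dv - t)^2 / \<delta>" using d0 by simp
        also have "(\<delta> * Dv - t)^2 / \<delta> = \<delta> * Dv^2 - 2 * Dv * t + t^2 / \<delta>"
          using d0 by (simp add: field_simps power2_eq_square)
        finally have "(Dv + t)^2 \<le> (1 + \<delta>) * Dv^2 + (1 + 1/\<delta>) * t^2"
          by (simp add: field_simps power2_eq_square)
        also have "(1 + 1/\<delta>) * t^2 \<le> (1 + 1/\<delta>) * 1"
          using d0 t_pos t_le1 by (intro mult_left_mono) (auto simp: power_le_one)
        finally show ?thesis by simp
      qed
      have i4: "1 / N \<le> (1 + \<delta>) / real n"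
        using N1 dn n2 by (simp add: N_def field_simps)
      have i5: "\<beta> * (Dv + t)^2 / (2 * N) \<le> lm * Dv^2 / real n + \<beta> * (1 + 1/\<delta>)"
      proof -
        have "\<beta> * (Dv + t)^2 / (2 * N) \<le> \<beta> * ((1 + \<delta>) * Dv^2 + (1 + 1/\<delta>)) / (2 * N)"
          using i3 b0 N1 by (intro divide_right_mono mult_left_mono) auto
        also have "\<dots> = (\<beta> / 2) * (1 + \<delta>) * Dv^2 * (1 / N) + (\<beta> / 2) * (1 + 1/\<delta>) * (1 / N)"
          by (simp add: field_simps) (simp add: add_divide_distrib)
        also have "\<dots> \<le> (\<beta> / 2) * (1 + \<delta>) * Dv^2 * ((1 + \<delta>) / real n) + (\<beta> / 2) * (1 + 1/\<delta>) * 1"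
        proof (intro add_mono mult_left_mono i4)
          show "1 / N \<le> 1" using N1 by simp
        qed (use b0 d0 in auto)
        also have "\<dots> \<le> lm * Dv^2 / real n + \<beta> * (1 + 1/\<delta>)"
          using b0 d0 unfolding lm_def by (simp add: power2_eq_square field_simps)
        finally show ?thesis .
      qed
      have i6: "- (\<beta> * N * t^2 / 2) \<le> - (\<beta> * real n * t^2 / 2) + \<beta>"
      proof -
        have "\<beta> * t^2 \<le> \<beta> * 1" using b0 t_pos t_le1 by (intro mult_left_mono) (auto simp: power_le_one)
        then show ?thesis using b0 by (simp add: N_def field_simps)
      qed
      have i7: "real n * \<beta>^2 / (2 * N * p) \<le> \<beta>^2 / p"
      proof -
        have "real n / (2 * N) \<le> 1" using N1 n2 by (simp add: N_def field_simps)
        then have "real n / (2 * N) * (\<beta>^2 / p) \<le> 1 * (\<beta>^2 / p)" using p0 by (intro mult_right_mono) auto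
        then show ?thesis by simp
      qed
      show ?thesis using i1 i2 i5 i6 i7 unfolding C1_def by simp
    qed
    also have "\<dots> = exp (- (\<beta> * real n * t^2 / 2) + C1) * exp (lm * (D n x)^2 / real n)"
      by (simp add: Dv_def exp_add[symmetric])
    finally show ?thesis by simp
  qed
  have "Mplus n \<le> (\<Sum>x\<in>spins n. Q_pmf n t x * (exp (- (\<beta> * real n * t^2 / 2) + C1) * exp (lm * (D n x)^2 / real n)))"
    unfolding Mplus_def by (intro sum_mono mult_left_mono pt) (auto simp: Qnn)
  also have "\<dots> = exp (- (\<beta> * real n * t^2 / 2) + C1) * (\<Sum>x\<in>spins n. Q_pmf n t x * exp (lm * (D n x)^2 / real n))"
    by (simp add: sum_distrib_left mult_ac)
  finally show ?thesis unfolding lm_def C1_def .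
qed

end



lemma markov_sum:
  fixes w f :: "'a \<Rightarrow> real"
  assumes "finite A" "\<And>x. x \<in> A \<Longrightarrow> 0 \<le> w x" "\<And>x. x \<in> A \<Longrightarrow> 0 \<le> f x" "0 < c"
  shows "(\<Sum>x\<in>{x\<in>A. c < f x}. w x) \<le> (\<Sum>x\<in>A. w x * f x) / c"
proof -
  have "(\<Sum>x\<in>{x\<in>A. c < f x}. w x) \<le> (\<Sum>x\<in>{x\<in>A. c < f x}. w x * f x / c)"
  proof (intro sum_mono)
    fix x assume x: "x \<in> {x\<in>A. c < f x}"
    then have "1 \<le> f x / c" using assms by simp
    then have "w x * 1 \<le> w x * (f x / c)" using x assms by (intro mult_left_mono) auto
    then show "w x \<le> w x * f x / c" by simp
  qed
  also have "\<dots> \<le> (\<Sum>x\<in>A. w x * f x / c)"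
    using assms by (intro sum_mono2) auto
  also have "\<dots> = (\<Sum>x\<in>A. w x * f x) / c" by (simp add: sum_divide_distrib)
  finally show ?thesis .
qed

lemma sum_SS: "(\<Sum>\<omega>\<in>sample_space n. f \<omega>) = (\<Sum>x\<in>spins n. \<Sum>G\<in>Pow (edge_slots n). f (x, G))"
  by (simp add: sample_space_def sum.cartesian_product)

lemma finite_SS [simp]: "finite (sample_space n)"
  by (simp add: sample_space_def)

context model
begin

definition Lr where "Lr n \<omega> = Q_pmf n t (fst \<omega>) / ising_pmf n (coupling n p (snd \<omega>)) \<beta> B (fst \<omega>)"
definition AG where "AG n G = (\<Sum>y\<in>spins n. Q_pmf n t y * exp (F n G y))"

lemma Z_pos: assumes "x \<in> spins n" shows "0 < ising_Z n A \<beta> B"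
proof -
  have "exp (ising_energy n A \<beta> B x) \<le> ising_Z n A \<beta> B"
    unfolding ising_Z_def by (rule member_le_sum[OF assms]) auto
  moreover have "0 < exp (ising_energy n A \<beta> B x)" by simp
  ultimately show ?thesis by linarith
qed

lemma ising_pos: assumes "x \<in> spins n" shows "0 < ising_pmf n A \<beta> B x"
  using Z_pos[OF assms] by (simp add: ising_pmf_def)

lemma L_eq: assumes x: "x \<in> spins n" shows "Lr n (x, G) = exp (- F n G x) * AG n G"
proof -
  define H where "H y = ising_energy n (coupling n p G) \<beta> B y" for y
  define c where "c = (2 * cosh \<theta>) ^ n"
  have cpos: "0 < c" by (simp add: c_def)
  have AGe: "AG n G = ising_Z n (coupling n p G) \<beta> B / c"
  proof -
    have "AG n G = (\<Sum>y\<in>spins n. exp (H y) / c)"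
      unfolding AG_def
    proof (intro sum.cong refl)
      fix y assume y: "y \<in> spins n"
      have "exp (\<theta> * Ssum n y) * exp (F n G y) = exp (H y)"
        by (simp add: F_def H_def exp_add[symmetric])
      then show "Q_pmf n t y * exp (F n G y) = exp (H y) / c"
        by (simp add: Q_pmf_exp[OF tt y] c_def)
    qed
    then show ?thesis by (simp add: ising_Z_def H_def sum_divide_distrib)
  qed
  have Zp: "0 < ising_Z n (coupling n p G) \<beta> B" by (rule Z_pos[OF x])
  have "Lr n (x, G) = (exp (\<theta> * Ssum n x) / c) / (exp (H x) / ising_Z n (coupling n p G) \<beta> B)"
    by (simp add: Lr_def Q_pmf_exp[OF tt x] c_def ising_pmf_def H_def)
  also have "\<dots> = exp (\<theta> * Ssum n x) / exp (H x) * (ising_Z n (coupling n p G) \<beta> B / c)"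
    using cpos Zp by (simp add: field_simps)
  also have "exp (\<theta> * Ssum n x) / exp (H x) = exp (- F n G x)"
    by (simp add: F_def H_def exp_diff[symmetric])
  finally show ?thesis by (simp add: AGe)
qed

lemma P_nonneg: "\<omega> \<in> sample_space n \<Longrightarrow> 0 \<le> P_er_pmf n p \<beta> B \<omega>"
proof -
  assume w: "\<omega> \<in> sample_space n"
  have "0 < ising_pmf n (coupling n p (snd \<omega>)) \<beta> B (fst \<omega>)" using w by (intro ising_pos) (auto simp: sample_space_def)
  moreover have "0 \<le> er_pmf n p (snd \<omega>)" using p0 p1 by (intro er_nonneg) auto
  ultimately show ?thesis by (simp add: P_er_pmf_def)
qed

lemma QG_nonneg: "0 \<le> QG_pmf n p t \<omega>"
  using p0 p1 by (auto simp: QG_pmf_def intro!: mult_nonneg_nonneg er_nonneg Qnn)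

lemma QG_eq: assumes "\<omega> \<in> sample_space n" shows "QG_pmf n p t \<omega> = Lr n \<omega> * P_er_pmf n p \<beta> B \<omega>"
proof -
  have "0 < ising_pmf n (coupling n p (snd \<omega>)) \<beta> B (fst \<omega>)" using assms by (intro ising_pos) (auto simp: sample_space_def)
  then show ?thesis by (simp add: QG_pmf_def Lr_def P_er_pmf_def)
qed

lemma Mplus_alt: "(\<Sum>G\<in>Pow (edge_slots n). er_pmf n p G * AG n G) = Mplus n"
  unfolding Mplus_def AG_def by (simp add: sum_distrib_left sum_distrib_right mult_ac sum.swap[of _ "Pow (edge_slots n)"])

lemma tail_L:
  assumes K0: "0 < K" and a0: "0 < a"
  shows "(\<Sum>\<omega>\<in>{\<omega>\<in>sample_space n. K < Lr n \<omega>}. QG_pmf n p t \<omega>) \<le> Mplus n / a + Mminus n * a / K"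
proof -
  define S1 where "S1 = {\<omega>\<in>sample_space n. a < AG n (snd \<omega>)}"
  define S2 where "S2 = {\<omega>\<in>sample_space n. K / a < exp (- F n (snd \<omega>) (fst \<omega>))}"
  have sub: "{\<omega>\<in>sample_space n. K < Lr n \<omega>} \<subseteq> S1 \<union> S2"
  proof
    fix \<omega> assume w: "\<omega> \<in> {\<omega>\<in>sample_space n. K < Lr n \<omega>}"
    obtain x G where o: "\<omega> = (x, G)" by fastforce
    have x: "x \<in> spins n" using w o by (simp add: sample_space_def)
    have AGnn: "0 \<le> AG n G" unfolding AG_def by (intro sum_nonneg mult_nonneg_nonneg Qnn) auto
    show "\<omega> \<in> S1 \<union> S2"
    proof (rule ccontr)
      assume "\<omega> \<notin> S1 \<union> S2"
      then have "AG n G \<le> a" "exp (- F n G x) \<le> K / a" using w o by (auto simp: S1_def S2_def)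
      then have "exp (- F n G x) * AG n G \<le> (K / a) * a"
        using AGnn K0 a0 by (intro mult_mono) auto
      then have "Lr n \<omega> \<le> K" using a0 by (simp add: o L_eq[OF x])
      then show False using w by simp
    qed
  qed
  have "(\<Sum>\<omega>\<in>{\<omega>\<in>sample_space n. K < Lr n \<omega>}. QG_pmf n p t \<omega>) \<le> (\<Sum>\<omega>\<in>S1 \<union> S2. QG_pmf n p t \<omega>)"
    using sub by (intro sum_mono2) (auto simp: S1_def S2_def QG_nonneg)
  also have "\<dots> \<le> (\<Sum>\<omega>\<in>S1. QG_pmf n p t \<omega>) + (\<Sum>\<omega>\<in>S2. QG_pmf n p t \<omega>)"
    by (rule sum_Un_le) (auto simp: S1_def S2_def QG_nonneg)
  also have "(\<Sum>\<omega>\<in>S1. QG_pmf n p t \<omega>) \<le> Mplus n / a"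
  proof -
    have "(\<Sum>\<omega>\<in>S1. QG_pmf n p t \<omega>) \<le> (\<Sum>\<omega>\<in>sample_space n. QG_pmf n p t \<omega> * AG n (snd \<omega>)) / a"
      unfolding S1_def
      by (rule markov_sum) (auto simp: QG_nonneg AG_def a0 intro!: sum_nonneg mult_nonneg_nonneg Qnn)
    also have "(\<Sum>\<omega>\<in>sample_space n. QG_pmf n p t \<omega> * AG n (snd \<omega>)) = Mplus n"
    proof -
      have "(\<Sum>\<omega>\<in>sample_space n. QG_pmf n p t \<omega> * AG n (snd \<omega>))
          = (\<Sum>x\<in>spins n. Q_pmf n t x * (\<Sum>G\<in>Pow (edge_slots n). er_pmf n p G * AG n G))"
        by (simp add: sum_SS QG_pmf_def sum_distrib_left mult_ac)
      also have "\<dots> = (\<Sum>x\<in>spins n. Q_pmf n t x) * Mplus n"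
        by (simp add: Mplus_alt sum_distrib_right)
      finally show ?thesis by (simp add: Q_total[OF tt])
    qed
    finally show ?thesis .
  qed
  also have "(\<Sum>\<omega>\<in>S2. QG_pmf n p t \<omega>) \<le> Mminus n * a / K"
  proof -
    have ka: "0 < K / a" using K0 a0 by simp
    have "(\<Sum>\<omega>\<in>S2. QG_pmf n p t \<omega>) \<le> (\<Sum>\<omega>\<in>sample_space n. QG_pmf n p t \<omega> * exp (- F n (snd \<omega>) (fst \<omega>))) / (K / a)"
      unfolding S2_def by (rule markov_sum[OF _ _ _ ka]) (auto simp: QG_nonneg)
    also have "(\<Sum>\<omega>\<in>sample_space n. QG_pmf n p t \<omega> * exp (- F n (snd \<omega>) (fst \<omega>))) = Mminus n"
      by (simp add: sum_SS QG_pmf_def Mminus_def sum_distrib_left mult_ac)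
    finally show ?thesis using a0 K0 by simp
  qed
  finally show ?thesis by simp
qed

end



context model
begin

lemma r_lt1: "\<beta> * \<kappa> < 1"
proof -
  have "\<beta> * \<kappa> = \<beta> * t / \<theta>" by (simp add: \<kappa>_def)
  moreover have "\<beta> * t < \<theta>" using thdef B0 by simp
  ultimately show ?thesis using th by simp
qed

lemma contig_ineq:
  "\<exists>Cst N0. 0 < Cst \<and> (\<forall>n\<ge>N0. \<forall>K>0. \<forall>E. QG n p t E \<le> K * P_er n p \<beta> B E + Cst / sqrt K)"
proof -
  define r where "r = \<beta> * \<kappa>"
  have r0: "0 < r" "r < 1" using r_lt1 b0 kappa_pos by (auto simp: r_def)
  define \<delta> where "\<delta> = (1 - r) / 4"
  have d0: "0 < \<delta>" "\<delta> \<le> 1" using r0 by (auto simp: \<delta>_def)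
  define lm where "lm = \<beta> * (1+\<delta>)^2 / 2"
  have lm0: "0 < lm"
  proof -
    have "0 < (1+\<delta>)^2" using d0 by (intro zero_less_power) auto
    then show ?thesis using b0 by (simp add: lm_def)
  qed
  have lmk: "2 * lm * \<kappa> < 1"
  proof -
    have "(1+\<delta>)^2 \<le> 1 + 3 * \<delta>" using d0 by (simp add: power2_eq_square algebra_simps mult_left_le)
    then have "r * (1+\<delta>)^2 \<le> r * (1 + 3 * \<delta>)" using r0 by (intro mult_left_mono) auto
    also have "\<dots> < 1"
    proof -
      have q: "0 < (1 - r) * (4 - 3*r)" using r0 by (intro mult_pos_pos) auto
      have q': "r * 7 < 4 + r * (r * 3)" using q by (simp add: algebra_simps)
      show ?thesis unfolding \<delta>_def using q' by (simp add: field_simps)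
    qed
    finally show ?thesis by (simp add: lm_def r_def algebra_simps)
  qed
  define W where "W = 4 * exp (C3 lm) / (1 - exp (-1))"
  have W0: "0 < W" by (simp add: W_def)
  define C1 where "C1 = \<beta> * (1 + 1/\<delta>) + \<beta> + \<beta>^2 / p"
  define Cst where "Cst = 1 + exp (C1) * W * exp (\<beta> + \<beta>^2 / p)"
  have Cst0: "0 < Cst" using W0 by (simp add: Cst_def add_pos_pos)
  define N0 where "N0 = max 2 (max (nat \<lceil>\<beta>/p\<rceil> + 1) (nat \<lceil>(1+\<delta>)/\<delta>\<rceil>))"
  have main: "QG n p t E \<le> K * P_er n p \<beta> B E + Cst / sqrt K" if n: "N0 \<le> n" and K0: "0 < K" for n K E
  proof -
    have n2: "2 \<le> n" using n by (simp add: N0_def)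
    have small: "\<beta> / cpl n \<le> 1"
    proof -
      have "\<beta>/p \<le> real n - 1" using n by (simp add: N0_def) linarith
      then have "\<beta> \<le> (real n - 1) * p" using p0 by (simp add: field_simps)
      moreover have "0 < (real n - 1) * p" using n2 p0 by simp
      ultimately show ?thesis by (simp add: cpl_def)
    qed
    have dn: "1 + \<delta> \<le> \<delta> * real n"
    proof -
      have "(1+\<delta>)/\<delta> \<le> real n" using n by (simp add: N0_def)
      then show ?thesis using d0 by (simp add: field_simps)
    qed
    define Mb where "Mb = exp (- (\<beta> * real n * t^2 / 2) + C1) * W"
    have Mb0: "0 < Mb" using W0 by (simp add: Mb_def)
    have Mp: "Mplus n \<le> Mb"
    proof -
      have "Mplus n \<le> exp (- (\<beta> * real n * t^2 / 2) + C1) * (\<Sum>x\<in>spins n. Q_pmf n t x * exp (lm * (D n x)^2 / real n))"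
        using Mplus_bound[OF n2 small d0(1) dn] unfolding lm_def C1_def .
      also have "\<dots> \<le> exp (- (\<beta> * real n * t^2 / 2) + C1) * W"
        using exp_moment[OF lm0 lmk, of n] n2 unfolding W_def by (intro mult_left_mono) auto
      finally show ?thesis by (simp add: Mb_def)
    qed
    have Mm: "Mminus n \<le> exp (\<beta> * real n * t^2 / 2 + \<beta> + \<beta>^2 / p)" by (rule Mminus_bound[OF n2 small])
    define a where "a = sqrt K * Mb"
    have a0: "0 < a" using K0 Mb0 by (simp add: a_def)
    have tail: "(\<Sum>\<omega>\<in>{\<omega>\<in>sample_space n. K < Lr n \<omega>}. QG_pmf n p t \<omega>) \<le> Cst / sqrt K"
    proof -
      have "(\<Sum>\<omega>\<in>{\<omega>\<in>sample_space n. K < Lr n \<omega>}. QG_pmf n p t \<omega>) \<le> Mplus n / a + Mminus n * a / K"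
        by (rule tail_L[OF K0 a0])
      also have "Mplus n / a \<le> Mb / a" using Mp a0 by (simp add: divide_right_mono)
      also have "Mb / a = 1 / sqrt K" using Mb0 K0 by (simp add: a_def)
      also have "Mminus n * a / K \<le> exp (\<beta> * real n * t^2 / 2 + \<beta> + \<beta>^2 / p) * a / K"
        using Mm a0 K0 by (intro divide_right_mono mult_right_mono) auto
      also have "exp (\<beta> * real n * t^2 / 2 + \<beta> + \<beta>^2 / p) * a / K = exp (C1) * W * exp (\<beta> + \<beta>^2 / p) / sqrt K"
      proof -
        define X where "X = exp (\<beta> * real n * t^2 / 2 + \<beta> + \<beta>^2 / p)"
        have e1: "X * Mb = exp (C1) * W * exp (\<beta> + \<beta>^2 / p)"
          unfolding X_def Mb_def
        proof -
          have "exp (\<beta> * real n * t^2 / 2 + \<beta> + \<beta>^2 / p) * exp (- (\<beta> * real n * t^2 / 2) + C1) = exp C1 * exp (\<beta> + \<beta>^2 / p)"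
            by (simp add: exp_add[symmetric])
          then show "exp (\<beta> * real n * t^2 / 2 + \<beta> + \<beta>^2 / p) * (exp (- (\<beta> * real n * t^2 / 2) + C1) * W) = exp C1 * W * exp (\<beta> + \<beta>^2 / p)"
            by (simp add: mult_ac)
        qed
        have e2: "X * a / K = (X * Mb) * (sqrt K / K)" unfolding a_def by simp
        have "sqrt K / K = 1 / sqrt K"
        proof -
          have s0: "0 < sqrt K" using K0 by simp
          have kk: "sqrt K * sqrt K = K" using K0 by simp
          show ?thesis using s0 by (simp add: field_simps kk)
        qed
        then show ?thesis using e1 e2 unfolding X_def by simp
      qed
      finally show ?thesis by (simp add: Cst_def add_divide_distrib)
    qed
    define A where "A = E \<inter> sample_space n"
    have finA: "finite A" by (simp add: A_def)
    have "QG n p t E = (\<Sum>\<omega>\<in>A. QG_pmf n p t \<omega>)" by (simp add: QG_def prob_of_def A_def)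
    also have "\<dots> = (\<Sum>\<omega>\<in>A. if Lr n \<omega> \<le> K then QG_pmf n p t \<omega> else 0) + (\<Sum>\<omega>\<in>A. if K < Lr n \<omega> then QG_pmf n p t \<omega> else 0)"
      by (simp add: sum.distrib[symmetric]) (intro sum.cong refl, auto)
    also have "(\<Sum>\<omega>\<in>A. if Lr n \<omega> \<le> K then QG_pmf n p t \<omega> else 0) \<le> (\<Sum>\<omega>\<in>A. K * P_er_pmf n p \<beta> B \<omega>)"
    proof (intro sum_mono)
      fix \<omega> assume w: "\<omega> \<in> A"
      then have wS: "\<omega> \<in> sample_space n" by (simp add: A_def)
      show "(if Lr n \<omega> \<le> K then QG_pmf n p t \<omega> else 0) \<le> K * P_er_pmf n p \<beta> B \<omega>"
        using QG_eq[OF wS] P_nonneg[OF wS] K0 by (auto intro: mult_right_mono)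
    qed
    also have "(\<Sum>\<omega>\<in>A. K * P_er_pmf n p \<beta> B \<omega>) = K * P_er n p \<beta> B E"
      by (simp add: P_er_def prob_of_def A_def sum_distrib_left)
    also have "(\<Sum>\<omega>\<in>A. if K < Lr n \<omega> then QG_pmf n p t \<omega> else 0) \<le> (\<Sum>\<omega>\<in>{\<omega>\<in>sample_space n. K < Lr n \<omega>}. QG_pmf n p t \<omega>)"
    proof -
      have "(\<Sum>\<omega>\<in>A. if K < Lr n \<omega> then QG_pmf n p t \<omega> else 0) = (\<Sum>\<omega>\<in>{\<omega>\<in>A. K < Lr n \<omega>}. QG_pmf n p t \<omega>)"
        by (simp add: sum.inter_filter[OF finA])
      also have "\<dots> \<le> (\<Sum>\<omega>\<in>{\<omega>\<in>sample_space n. K < Lr n \<omega>}. QG_pmf n p t \<omega>)"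
        by (intro sum_mono2) (auto simp: A_def QG_nonneg)
      finally show ?thesis .
    qed
    finally show ?thesis using tail by linarith
  qed
  show ?thesis using Cst0 main by blast
qed

lemma contiguity:
  assumes "(\<lambda>n. P_er n p \<beta> B (E n)) \<longlonglongrightarrow> 0"
  shows "(\<lambda>n. QG n p t (E n)) \<longlonglongrightarrow> 0"
proof -
  obtain Cst N0 where C0: "0 < Cst" and main: "\<And>n K E. N0 \<le> n \<Longrightarrow> 0 < K \<Longrightarrow> QG n p t E \<le> K * P_er n p \<beta> B E + Cst / sqrt K"
    using contig_ineq by blast
  show ?thesis unfolding LIMSEQ_iff
  proof (intro allI impI)
    fix r :: real assume r: "0 < r"
    define K where "K = (2 * Cst / r)^2"
    have K0: "0 < K" using C0 r by (simp add: K_def)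
    have sK: "sqrt K = 2 * Cst / r" using C0 r by (simp add: K_def)
    have CK: "Cst / sqrt K = r / 2" using C0 r by (simp add: sK)
    have "0 < r / (2 * K)" using r K0 by simp
    then obtain no where no: "\<And>n. no \<le> n \<Longrightarrow> norm (P_er n p \<beta> B (E n) - 0) < r / (2 * K)"
      using assms unfolding LIMSEQ_iff by blast
    show "\<exists>no. \<forall>n\<ge>no. norm (QG n p t (E n) - 0) < r"
    proof (intro exI allI impI)
      fix n assume n: "max no N0 \<le> n"
      have "QG n p t (E n) \<le> K * P_er n p \<beta> B (E n) + r / 2" using main[of n K "E n"] n K0 CK by simp
      moreover have "K * P_er n p \<beta> B (E n) < r / 2"
      proof -
        have "\<bar>P_er n p \<beta> B (E n)\<bar> < r / (2 * K)" using no[of n] n by simp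
        then have "K * \<bar>P_er n p \<beta> B (E n)\<bar> < K * (r / (2 * K))" using K0 by (intro mult_strict_left_mono)
        also have "K * (r / (2 * K)) = r / 2" using K0 by simp
        finally have "K * \<bar>P_er n p \<beta> B (E n)\<bar> < r / 2" .
        moreover have "K * P_er n p \<beta> B (E n) \<le> K * \<bar>P_er n p \<beta> B (E n)\<bar>" using K0 by (intro mult_left_mono) auto
        ultimately show ?thesis by linarith
      qed
      moreover have "0 \<le> QG n p t (E n)"
        by (simp add: QG_def prob_of_def sum_nonneg QG_nonneg)
      ultimately show "norm (QG n p t (E n) - 0) < r" by simp
    qed
  qed
qed

end



lemma contiguity_main:
  fixes p t :: real
  assumes "0 < p" "p \<le> 1" "0 < t" "t < 1" "(\<beta>, B) \<in> Theta_t t"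
    and "(\<lambda>n. P_er n p \<beta> B (E n)) \<longlonglongrightarrow> 0"
  shows "(\<lambda>n. QG n p t (E n)) \<longlonglongrightarrow> 0"
proof -
  have b: "0 < \<beta>" "0 < B" "t = tanh (\<beta> * t + B)" using assms(5) by (auto simp: Theta_t_def)
  have "0 < \<beta> * t + B" using b assms by (simp add: add_pos_pos)
  then interpret model "\<beta> * t + B" t p \<beta> B
    using b assms by unfold_locales auto
  show ?thesis by (rule contiguity[OF assms(6)])
qed

lemma theta0_ex:
  fixes t :: real assumes "0 < t" "t < 1"
  shows "\<exists>\<theta>0. 0 < \<theta>0 \<and> tanh \<theta>0 = t"
proof -
  define \<theta>0 where "\<theta>0 = ln ((1 + t) / (1 - t)) / 2"
  have q: "1 < (1 + t) / (1 - t)" using assms by (simp add: field_simps)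
  have pos: "0 < \<theta>0" using q by (simp add: \<theta>0_def)
  have e: "exp (- (2 * \<theta>0)) = (1 - t) / (1 + t)"
  proof -
    have "exp (- (2 * \<theta>0)) = exp (- ln ((1 + t) / (1 - t)))" by (simp add: \<theta>0_def)
    also have "\<dots> = 1 / ((1 + t) / (1 - t))" using q by (simp add: exp_minus)
    finally show ?thesis by simp
  qed
  have "tanh \<theta>0 = (1 - (1 - t) / (1 + t)) / (1 + (1 - t) / (1 + t))"
    unfolding tanh_real_altdef[of \<theta>0] by (simp only: mult_minus_left e)
  also have "\<dots> = t" using assms by (simp add: field_simps)
  finally show ?thesis using pos by blast
qed

lemma QG_total:
  fixes p t :: real
  assumes "0 < p" "p \<le> 1" "0 < t" "t < 1"
  shows "QG n p t UNIV = 1"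
proof -
  obtain \<theta>0 where th0: "0 < \<theta>0" "tanh \<theta>0 = t" using theta0_ex[OF assms(3,4)] by blast
  have "QG n p t UNIV = (\<Sum>x\<in>spins n. \<Sum>G\<in>Pow (edge_slots n). Q_pmf n t x * er_pmf n p G)"
    by (simp add: QG_def prob_of_def sum_SS QG_pmf_def)
  also have "\<dots> = (\<Sum>x\<in>spins n. Q_pmf n t x)"
    by (simp add: sum_distrib_left[symmetric] er_total)
  also have "\<dots> = 1" using Q_total[of t \<theta>0 n] th0 by simp
  finally show ?thesis .
qed

lemma QG_union:
  fixes p t :: real
  assumes "0 < p" "p \<le> 1" "0 < t" "t < 1"
  shows "QG n p t (E1 \<union> E2) \<le> QG n p t E1 + QG n p t E2"
proof -
  have nn: "0 \<le> QG_pmf n p t \<omega>" for \<omega>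
    using assms by (auto simp: QG_pmf_def intro!: mult_nonneg_nonneg er_nonneg Q_nonneg)
  have "QG n p t (E1 \<union> E2) = (\<Sum>\<omega>\<in>(E1 \<inter> sample_space n) \<union> (E2 \<inter> sample_space n). QG_pmf n p t \<omega>)"
    by (simp add: QG_def prob_of_def Int_Un_distrib2)
  also have "\<dots> \<le> QG n p t E1 + QG n p t E2"
    unfolding QG_def prob_of_def by (rule sum_Un_le) (auto simp: nn)
  finally show ?thesis .
qed

theorem theorem4:
  fixes p t :: real
  assumes "0 < p" "p \<le> 1" "0 < t" "t < 1"
  shows "(\<forall>(\<beta>, B) \<in> Theta_t t. \<forall>E :: nat \<Rightarrow> ((nat \<Rightarrow> real) \<times> (nat \<times> nat) set) set.
            (\<lambda>n. P_er n p \<beta> B (E n)) \<longlonglongrightarrow> 0 \<longrightarrow> (\<lambda>n. QG n p t (E n)) \<longlonglongrightarrow> 0)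
       \<and> \<not> (\<exists>est. \<forall>(\<beta>, B) \<in> Theta_t t. consistent_at p est \<beta> B)
       \<and> \<not> (\<exists>est. \<forall>\<beta> B. \<beta> > 0 \<and> B \<noteq> 0 \<longrightarrow> consistent_at p est \<beta> B)"
proof -
  have P1: "\<forall>(\<beta>, B) \<in> Theta_t t. \<forall>E :: nat \<Rightarrow> ((nat \<Rightarrow> real) \<times> (nat \<times> nat) set) set.
            (\<lambda>n. P_er n p \<beta> B (E n)) \<longlonglongrightarrow> 0 \<longrightarrow> (\<lambda>n. QG n p t (E n)) \<longlonglongrightarrow> 0"
    using contiguity_main[OF assms] by blast
  obtain \<theta>0 where th0: "0 < \<theta>0" "tanh \<theta>0 = t" using theta0_ex[OF assms(3,4)] by blast
  define q1 where "q1 = (\<theta>0 / (2 * t), \<theta>0 / 2)"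
  define q2 where "q2 = (\<theta>0 / (3 * t), 2 * \<theta>0 / 3)"
  have q1T: "q1 \<in> Theta_t t" using th0 assms by (simp add: q1_def Theta_t_def)
  have q2T: "q2 \<in> Theta_t t"
  proof -
    have "\<theta>0 / (3 * t) * t + 2 * \<theta>0 / 3 = \<theta>0" using assms by (simp add: field_simps)
    then show ?thesis using th0 assms by (simp add: q2_def Theta_t_def)
  qed
  have q12: "q1 \<noteq> q2" using th0 assms by (simp add: q1_def q2_def field_simps)
  have P2: "\<not> (\<exists>est. \<forall>(\<beta>, B) \<in> Theta_t t. consistent_at p est \<beta> B)"
  proof
    assume "\<exists>est. \<forall>(\<beta>, B) \<in> Theta_t t. consistent_at p est \<beta> B"
    then obtain est where est: "\<forall>(\<beta>, B) \<in> Theta_t t. consistent_at p est \<beta> B" by blast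
    define \<epsilon> where "\<epsilon> = dist q1 q2 / 3"
    have e0: "0 < \<epsilon>" using q12 by (simp add: \<epsilon>_def)
    define E1 where "E1 n = {\<omega>. dist (est n \<omega>) q1 > \<epsilon>}" for n
    define E2 where "E2 n = {\<omega>. dist (est n \<omega>) q2 > \<epsilon>}" for n
    have c1: "(\<lambda>n. QG n p t (E1 n)) \<longlonglongrightarrow> 0"
    proof -
      have "consistent_at p est (fst q1) (snd q1)" using est q1T by (cases q1) auto
      then have "(\<lambda>n. P_er n p (fst q1) (snd q1) (E1 n)) \<longlonglongrightarrow> 0"
        using e0 unfolding consistent_at_def E1_def by simp
      then show ?thesis using P1 q1T by (cases q1) auto
    qed
    have c2: "(\<lambda>n. QG n p t (E2 n)) \<longlonglongrightarrow> 0"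
    proof -
      have "consistent_at p est (fst q2) (snd q2)" using est q2T by (cases q2) auto
      then have "(\<lambda>n. P_er n p (fst q2) (snd q2) (E2 n)) \<longlonglongrightarrow> 0"
        using e0 unfolding consistent_at_def E2_def by simp
      then show ?thesis using P1 q2T by (cases q2) auto
    qed
    have lim: "(\<lambda>n. QG n p t (E1 n) + QG n p t (E2 n)) \<longlonglongrightarrow> 0 + 0"
      by (rule tendsto_add[OF c1 c2])
    have cover: "E1 n \<union> E2 n = UNIV" for n
    proof -
      have "\<omega> \<in> E1 n \<union> E2 n" for \<omega>
      proof (rule ccontr)
        assume "\<omega> \<notin> E1 n \<union> E2 n"
        then have "dist (est n \<omega>) q1 \<le> \<epsilon>" "dist (est n \<omega>) q2 \<le> \<epsilon>" by (auto simp: E1_def E2_def)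
        then have "dist q1 q2 \<le> 2 * \<epsilon>" using dist_triangle2[of q1 q2 "est n \<omega>"] by (simp add: dist_commute)
        then show False using e0 by (simp add: \<epsilon>_def)
      qed
      then show ?thesis by blast
    qed
    have ge: "1 \<le> QG n p t (E1 n) + QG n p t (E2 n)" for n
      using QG_union[OF assms, of n "E1 n" "E2 n"] QG_total[OF assms, of n] cover[of n] by simp
    have "1 \<le> (0::real) + 0"
      by (rule LIMSEQ_le_const[OF lim]) (use ge in blast)
    then show False by simp
  qed
  have P3: "\<not> (\<exists>est. \<forall>\<beta> B. \<beta> > 0 \<and> B \<noteq> 0 \<longrightarrow> consistent_at p est \<beta> B)"
  proof
    assume "\<exists>est. \<forall>\<beta> B. \<beta> > 0 \<and> B \<noteq> 0 \<longrightarrow> consistent_at p est \<beta> B"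
    then obtain est where est: "\<forall>\<beta> B. \<beta> > 0 \<and> B \<noteq> 0 \<longrightarrow> consistent_at p est \<beta> B" by blast
    then have "\<forall>(\<beta>, B) \<in> Theta_t t. consistent_at p est \<beta> B" by (auto simp: Theta_t_def)
    then show False using P2 by blast
  qed
  show ?thesis using P1 P2 P3 by blast
qed


end
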